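(* Let $\rho>0$, let $A\colon[0,\infty)\to\mathbb R^{n\times n}$ and $f\colon[0,\infty)\times\mathbb R^n\to\mathbb R^n$ be continuous, and suppose that $x'=A(t)x$ has an exponential dichotomy on $[0,\infty)$ with constants $N,\lambda>0$. Suppose there exists $L>0$ such that $|f(t,x)|\le L|x|$ for all $t\ge0$ and $x\in B_\rho(0)$, and that $L<\lambda/(2N)$. Then there exists $\varepsilon>0$ such that if $y$ is a pseudosolution of $x'=A(t)x+f(t,x)$ on $[0,\tau)$ for some $\tau\in(0,\infty]$ with $\sigma_y\le\varepsilon$, then this equation has a pseudosolution $z$ on $[0,\tau)$ with $z(t)\in B_\rho(0)$ for all $t\in[0,\tau)$ and $e_z(t)=e_y(t)$ for all $t\in[0,\tau)$.
   Context: $|\cdot|$ is a fixed norm on $\mathbb R^n$ and the induced matrix norm; $B_r(x)=\{y:|y-x|\le r\}$. For continuous $g\colon[0,\infty)\times\mathbb R^n\to\mathbb R^n$ and $\tau\in(0,\infty]$, a pseudosolution of $x'=g(t,x)$ on $[0,\tau)$ is a $C^1$ map $y\colon[0,\tau)\to\mathbb R^n$ with $\sigma_y:=\sup_{0\le t<\tau}|y'(t)-g(t,y(t))|<\infty$; its error function is $e_y(t):=|y'(t)-g(t,y(t))|$, $t\in[0,\tau)$. Here $g(t,x)=A(t)x+f(t,x)$. With $T(t,s)$ the transition matrix of $x'=A(t)x$: an exponential dichotomy on $[0,\infty)$ consists of projections $P(t)$ and constants $N,\lambda>0$ with $P(t)T(t,s)=T(t,s)P(s)$ for all $t,s\ge0$,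 $|T(t,s)P(s)|\le Ne^{-\lambda(t-s)}$ for $t\ge s\ge0$, and $|T(t,s)(I-P(s))|\le Ne^{-\lambda(s-t)}$ for $0\le t\le s$. *)

theory Defs
  imports "HOL-Analysis.Analysis"
begin

definition is_norm :: "(real^'n \<Rightarrow> real) \<Rightarrow> bool" where
  "is_norm nrm \<longleftrightarrow>
     (\<forall>x. 0 \<le> nrm x) \<and> (\<forall>x. nrm x = 0 \<longleftrightarrow> x = 0) \<and>
     (\<forall>c x. nrm (c *\<^sub>R x) = \<bar>c\<bar> * nrm x) \<and>
     (\<forall>x y. nrm (x + y) \<le> nrm x + nrm y)"

definition mnorm :: "(real^'n \<Rightarrow> real) \<Rightarrow> real^'n^'n \<Rightarrow> real" where
  "mnorm nrm M = Sup {nrm (M *v x) | x. nrm x = 1}"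

definition Ivl :: "ereal \<Rightarrow> real set" where
  "Ivl \<tau> = {t. 0 \<le> t \<and> ereal t < \<tau>}"

definition err_fun :: "(real^'n \<Rightarrow> real) \<Rightarrow> (real \<Rightarrow> real^'n \<Rightarrow> real^'n) \<Rightarrow> ereal
    \<Rightarrow> (real \<Rightarrow> real^'n) \<Rightarrow> real \<Rightarrow> real" where
  "err_fun nrm g \<tau> y t = nrm (vector_derivative y (at t within Ivl \<tau>) - g t (y t))"

definition sigma :: "(real^'n \<Rightarrow> real) \<Rightarrow> (real \<Rightarrow> real^'n \<Rightarrow> real^'n) \<Rightarrow> ereal
    \<Rightarrow> (real \<Rightarrow> real^'n) \<Rightarrow> real" where
  "sigma nrm g \<tau> y = (SUP t\<in>Ivl \<tau>. err_fun nrm g \<tau> y t)"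

definition pseudosolution :: "(real^'n \<Rightarrow> real) \<Rightarrow> (real \<Rightarrow> real^'n \<Rightarrow> real^'n) \<Rightarrow> ereal
    \<Rightarrow> (real \<Rightarrow> real^'n) \<Rightarrow> bool" where
  "pseudosolution nrm g \<tau> y \<longleftrightarrow>
     (\<forall>t\<in>Ivl \<tau>. y differentiable (at t within Ivl \<tau>)) \<and>
     continuous_on (Ivl \<tau>) (\<lambda>t. vector_derivative y (at t within Ivl \<tau>)) \<and>
     bdd_above (err_fun nrm g \<tau> y ` Ivl \<tau>)"

definition transition_matrix :: "(real \<Rightarrow> real^'n^'n) \<Rightarrow> (real \<Rightarrow> real \<Rightarrow> real^'n^'n) \<Rightarrow> bool" where
  "transition_matrix A T \<longleftrightarrow>
     (\<forall>s\<ge>0. T s s = mat 1 \<and>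
        (\<forall>t\<ge>0. ((\<lambda>u. T u s) has_vector_derivative (A t ** T t s)) (at t within {0..})))"

definition exp_dichotomy :: "(real^'n \<Rightarrow> real) \<Rightarrow> (real \<Rightarrow> real^'n^'n) \<Rightarrow>
    (real \<Rightarrow> real^'n^'n) \<Rightarrow> real \<Rightarrow> real \<Rightarrow> bool" where
  "exp_dichotomy nrm A P N lam \<longleftrightarrow> N > 0 \<and> lam > 0 \<and>
     (\<exists>T. transition_matrix A T \<and>
       (\<forall>t\<ge>0. P t ** P t = P t) \<and>
       (\<forall>t\<ge>0. \<forall>s\<ge>0. P t ** T t s = T t s ** P s) \<and>
       (\<forall>t s. 0 \<le> s \<and> s \<le> t \<longrightarrow> mnorm nrm (T t s ** P s) \<le> N * exp (- lam * (t - s))) \<and>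
       (\<forall>t s. 0 \<le> t \<and> t \<le> s \<longrightarrow> mnorm nrm (T t s ** (mat 1 - P s)) \<le> N * exp (- lam * (s - t))))"

end

theory Submission
  imports Defs "HOL-Complex_Analysis.Great_Picard"
begin


lemma nrm_basic:
  assumes "is_norm nrm"
  shows nrm_nonneg: "0 \<le> nrm x" and nrm_zero_iff: "nrm x = 0 \<longleftrightarrow> x = 0"
    and nrm_scale: "nrm (c *\<^sub>R x) = \<bar>c\<bar> * nrm x"
    and nrm_tri: "nrm (x + y) \<le> nrm x + nrm y"
  using assms unfolding is_norm_def by auto

lemma nrm_0: "is_norm nrm \<Longrightarrow> nrm 0 = 0"
  using nrm_zero_iff by blast

lemma nrm_minus: "is_norm nrm \<Longrightarrow> nrm (- x) = nrm x"
  using nrm_scale[of nrm "-1" x] by simp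

lemma nrm_diff_commute: "is_norm nrm \<Longrightarrow> nrm (x - y) = nrm (y - x)"
  using nrm_minus[of nrm "x - y"] by simp

lemma nrm_tri_diff: "is_norm nrm \<Longrightarrow> nrm x - nrm y \<le> nrm (x - y)"
  using nrm_tri[of nrm "x - y" y] by simp

lemma nrm_sum:
  assumes "is_norm nrm"
  shows "nrm (sum f S) \<le> sum (\<lambda>i. nrm (f i)) S"
proof (cases "finite S")
  case True
  then show ?thesis
  proof (induction S rule: finite_induct)
    case empty then show ?case using nrm_0[OF assms] by simp
  next
    case (insert x F)
    then show ?case using nrm_tri[OF assms, of "f x" "sum f F"] by simp
  qed
next
  case False then show ?thesis using nrm_0[OF assms] by simp
qed

lemma nrm_upper:
  fixes nrm :: "real^'n \<Rightarrow> real"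
  assumes "is_norm nrm"
  obtains C where "C > 0" "\<And>x. nrm x \<le> C * norm x"
proof -
  define C where "C = 1 + (\<Sum>b\<in>Basis. nrm (b::real^'n))"
  have C0: "C > 0" unfolding C_def using nrm_nonneg[OF assms] by (simp add: add_pos_nonneg sum_nonneg)
  have "nrm x \<le> C * norm x" for x
  proof -
    have "nrm x = nrm (\<Sum>b\<in>Basis. (x \<bullet> b) *\<^sub>R b)"
      by (simp only: euclidean_representation)
    also have "\<dots> \<le> (\<Sum>b\<in>Basis. nrm ((x \<bullet> b) *\<^sub>R b))"
      by (rule nrm_sum[OF assms])
    also have "\<dots> = (\<Sum>b\<in>Basis. \<bar>x \<bullet> b\<bar> * nrm b)"
      using nrm_scale[OF assms] by simp
    also have "\<dots> \<le> (\<Sum>b\<in>Basis. norm x * nrm b)"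
      by (intro sum_mono mult_right_mono) (auto simp: Basis_le_norm nrm_nonneg[OF assms])
    also have "\<dots> = norm x * (\<Sum>b\<in>Basis. nrm b)"
      by (simp add: sum_distrib_left)
    also have "\<dots> \<le> C * norm x"
      unfolding C_def by (simp add: algebra_simps)
    finally show ?thesis .
  qed
  then show ?thesis using that C0 by blast
qed

lemma nrm_lipschitz:
  fixes nrm :: "real^'n \<Rightarrow> real"
  assumes N: "is_norm nrm" and C: "\<And>x. nrm x \<le> C * norm x"
  shows "\<bar>nrm x - nrm y\<bar> \<le> C * norm (x - y)"
proof -
  have "nrm x - nrm y \<le> C * norm (x - y)"
    using nrm_tri_diff[OF N, of x y] C[of "x - y"] by linarith
  moreover have "nrm y - nrm x \<le> C * norm (x - y)"
    using nrm_tri_diff[OF N, of y x] C[of "y - x"] by (simp add: norm_minus_commute)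
  ultimately show ?thesis by linarith
qed

lemma nrm_continuous:
  fixes nrm :: "real^'n \<Rightarrow> real"
  assumes N: "is_norm nrm"
  shows "continuous_on S nrm"
proof -
  obtain C where C: "C > 0" "\<And>x. nrm x \<le> C * norm x" using nrm_upper[OF N] by blast
  have "isCont nrm x" for x
    unfolding continuous_at_eps_delta dist_real_def dist_norm
  proof (intro allI impI)
    fix e :: real assume e: "e > 0"
    show "\<exists>d>0. \<forall>y. norm (y - x) < d \<longrightarrow> \<bar>nrm y - nrm x\<bar> < e"
    proof (intro exI[of _ "e / C"] conjI allI impI)
      show "e / C > 0" using e C(1) by simp
      fix y assume "norm (y - x) < e / C"
      then have "C * norm (y - x) < e" using C(1) by (simp add: field_simps)
      then show "\<bar>nrm y - nrm x\<bar> < e" using nrm_lipschitz[OF N C(2), of y x] by linarith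
    qed
  qed
  then show ?thesis by (simp add: continuous_at_imp_continuous_on)
qed

lemma nrm_lower:
  fixes nrm :: "real^'n \<Rightarrow> real"
  assumes N: "is_norm nrm"
  obtains D where "D > 0" "\<And>x. norm x \<le> D * nrm x"
proof -
  obtain b :: "real^'n" where b: "b \<in> Basis" using nonempty_Basis by blast
  have ne: "sphere (0::real^'n) 1 \<noteq> {}"
  proof -
    have "b \<in> sphere (0::real^'n) 1" using b by simp
    then show ?thesis by blast
  qed
  obtain u where u1: "u \<in> sphere 0 1" and u2: "\<forall>x \<in> sphere 0 1. nrm u \<le> nrm x"
    using continuous_attains_inf[OF compact_sphere ne nrm_continuous[OF N]] by blast
  note u = u1 bspec[OF u2]
  have "u \<noteq> 0" using u(1) by auto
  then have m0: "nrm u > 0" using nrm_nonneg[OF N, of u] nrm_zero_iff[OF N, of u] by auto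
  have "norm x \<le> (1 / nrm u) * nrm x" for x
  proof (cases "x = 0")
    case True then show ?thesis using nrm_0[OF N] by simp
  next
    case False
    then have "(1 / norm x) *\<^sub>R x \<in> sphere 0 1" by simp
    then have "nrm u \<le> nrm ((1 / norm x) *\<^sub>R x)" by (rule u(2))
    also have "\<dots> = nrm x / norm x" using nrm_scale[OF N] by simp
    finally show ?thesis using False m0 by (simp add: field_simps)
  qed
  moreover have "1 / nrm u > 0" using m0 by simp
  ultimately show ?thesis using that by blast
qed



lemma nrm_dual:
  fixes nrm :: "real^'n \<Rightarrow> real"
  assumes N: "is_norm nrm"
  obtains a where "\<And>x. a \<bullet> x \<le> nrm x" "a \<bullet> v = nrm v"
proof (cases "v = 0")
  case True
  then show ?thesis using that[of 0] nrm_nonneg[OF N] nrm_0[OF N] by simp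
next
  case False
  then have nv: "nrm v > 0" using nrm_nonneg[OF N, of v] nrm_zero_iff[OF N, of v] by auto
  define u where "u = (1 / nrm v) *\<^sub>R v"
  have nu: "nrm u = 1" unfolding u_def using nv nrm_scale[OF N] by simp
  define U where "U = {x. nrm x < 1}"
  have cU: "convex U" unfolding U_def convex_def
  proof (intro allI impI ballI, clarsimp)
    fix x y :: "real^'n" and s t :: real
    assume "nrm x < 1" "nrm y < 1" "0 \<le> s" "0 \<le> t" "s + t = 1"
    then have "nrm (s *\<^sub>R x + t *\<^sub>R y) \<le> s * nrm x + t * nrm y"
      using nrm_tri[OF N, of "s *\<^sub>R x" "t *\<^sub>R y"] nrm_scale[OF N] by simp
    also have "\<dots> < 1"
    proof -
      have "s * nrm x \<le> s" "t * nrm y \<le> t"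
        using \<open>nrm x < 1\<close> \<open>nrm y < 1\<close> \<open>0\<le>s\<close> \<open>0\<le>t\<close>
        by (simp_all add: mult_left_le)
      moreover have "s * nrm x < s \<or> t * nrm y < t"
      proof (cases "s > 0")
        case True then show ?thesis using mult_strict_left_mono[of "nrm x" 1 s] \<open>nrm x < 1\<close> by simp
      next
        case False
        then have "t > 0" using \<open>0\<le>s\<close> \<open>s+t=1\<close> by linarith
        then show ?thesis using mult_strict_left_mono[of "nrm y" 1 t] \<open>nrm y < 1\<close> by simp
      qed
      ultimately show ?thesis using \<open>s+t=1\<close> by linarith
    qed
    finally show "nrm (s *\<^sub>R x + t *\<^sub>R y) < 1" .
  qed
  have eqU: "(\<lambda>x. u - x) ` U = (+) u ` (uminus ` U)" by (simp add: image_image)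
  have cvx: "convex ((\<lambda>x. u - x) ` U)"
    unfolding eqU by (intro convex_translation convex_negations cU)
  have nz: "(0::real^'n) \<notin> (\<lambda>x. u - x) ` U" unfolding U_def using nu by auto
  obtain a where a1: "a \<noteq> 0" and a2: "\<forall>y\<in>(\<lambda>x. u - x) ` U. 0 \<le> a \<bullet> y"
    using separating_hyperplane_set_0[OF cvx nz] by blast
  have a: "a \<noteq> 0" "\<And>x. x \<in> U \<Longrightarrow> 0 \<le> a \<bullet> (u - x)"
    using a1 a2 by auto
  have au: "a \<bullet> x \<le> a \<bullet> u" if "nrm x < 1" for x
    using a(2)[of x] that unfolding U_def by (simp add: inner_diff_right)
  have "0 \<in> U" unfolding U_def using nrm_0[OF N] by simp
  have bound: "a \<bullet> x \<le> nrm x * (a \<bullet> u)" for x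
  proof -
    have au0: "0 \<le> a \<bullet> u" using au[of 0] nrm_0[OF N] by simp
    have "a \<bullet> x \<le> nrm x * (a \<bullet> u) + e" if e: "e > 0" for e
    proof -
      define d where "d = e / (1 + a \<bullet> u)"
      have d0: "d > 0" unfolding d_def using e au0 by simp
      have pos: "nrm x + d > 0" using d0 nrm_nonneg[OF N, of x] by linarith
      have "nrm ((1 / (nrm x + d)) *\<^sub>R x) = nrm x / (nrm x + d)"
        using nrm_scale[OF N] pos by simp
      also have "\<dots> < 1" using pos d0 by simp
      finally have "a \<bullet> ((1 / (nrm x + d)) *\<^sub>R x) \<le> a \<bullet> u" by (rule au)
      then have "a \<bullet> x \<le> (nrm x + d) * (a \<bullet> u)" using pos by (simp add: field_simps)
      also have "\<dots> = nrm x * (a \<bullet> u) + d * (a \<bullet> u)" by (simp add: algebra_simps)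
      also have "d * (a \<bullet> u) \<le> e"
        unfolding d_def using e au0 by (simp add: field_simps)
      finally show ?thesis by linarith
    qed
    then show ?thesis by (meson field_le_epsilon)
  qed
  have aupos: "a \<bullet> u > 0"
  proof (rule ccontr)
    assume "\<not> a \<bullet> u > 0"
    then have "a \<bullet> a \<le> 0" using bound[of a] nrm_nonneg[OF N, of a]
      by (smt (verit) mult_nonneg_nonpos)
    then show False using a(1) inner_gt_zero_iff[of a] by linarith
  qed
  define b where "b = (1 / (a \<bullet> u)) *\<^sub>R a"
  show ?thesis
  proof (rule that[of b])
    show "b \<bullet> x \<le> nrm x" for x
      using bound[of x] aupos unfolding b_def by (simp add: field_simps)
    have "b \<bullet> u = 1" unfolding b_def using aupos by simp
    then show "b \<bullet> v = nrm v"
      unfolding u_def using nv by (simp add: inner_scaleR_right field_simps)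
  qed
qed

lemma nrm_integral_le:
  fixes nrm :: "real^'n \<Rightarrow> real" and g :: "real \<Rightarrow> real^'n"
  assumes N: "is_norm nrm"
    and g: "(g has_integral I) S" and b: "(\<beta> has_integral J) S"
    and le: "\<And>s. s \<in> S \<Longrightarrow> nrm (g s) \<le> \<beta> s"
  shows "nrm I \<le> J"
proof -
  obtain a where a: "\<And>x. a \<bullet> x \<le> nrm x" "a \<bullet> I = nrm I" using nrm_dual[OF N] by blast
  have "((\<lambda>s. a \<bullet> g s) has_integral a \<bullet> I) S"
    using has_integral_linear[OF g bounded_linear_inner_right[of a]] by (simp add: o_def)
  moreover have "\<And>s. s \<in> S \<Longrightarrow> a \<bullet> g s \<le> \<beta> s" using a(1) le order_trans by blast
  ultimately have "a \<bullet> I \<le> J" using has_integral_le[OF _ b] by blast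
  then show ?thesis using a(2) by simp
qed

lemma mnorm_le:
  fixes nrm :: "real^'n \<Rightarrow> real"
  assumes N: "is_norm nrm"
  shows "nrm (M *v x) \<le> mnorm nrm M * nrm x"
proof -
  obtain C where C: "C > 0" "\<And>x. nrm x \<le> C * norm x" using nrm_upper[OF N] by blast
  obtain D where D: "D > 0" "\<And>x. norm x \<le> D * nrm x" using nrm_lower[OF N] by blast
  obtain K where K: "\<And>x. norm (M *v x) \<le> norm x * K"
    using bounded_linear.bounded[OF matrix_vector_mul_bounded_linear[of M]] by blast
  have bdd: "bdd_above {nrm (M *v x) | x. nrm x = 1}"
  proof (rule bdd_aboveI)
    fix r assume "r \<in> {nrm (M *v x) | x. nrm x = 1}"
    then obtain x where x: "r = nrm (M *v x)" "nrm x = 1" by blast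
    have "r \<le> C * norm (M *v x)" using C(2) x(1) by simp
    also have "\<dots> \<le> C * (norm x * K)" using K[of x] C(1) by (simp add: mult_left_mono)
    also have "\<dots> \<le> C * (D * \<bar>K\<bar>)"
    proof -
      have "norm x \<le> D" using D(2)[of x] x(2) by simp
      have "norm x * K \<le> norm x * \<bar>K\<bar>" by (simp add: mult_left_mono)
      also have "\<dots> \<le> D * \<bar>K\<bar>" using \<open>norm x \<le> D\<close> by (simp add: mult_right_mono)
      finally show ?thesis using C(1) by simp
    qed
    finally show "r \<le> C * (D * \<bar>K\<bar>)" .
  qed
  show ?thesis
  proof (cases "x = 0")
    case True then show ?thesis using nrm_0[OF N] by (simp add: matrix_vector_mult_0_right)
  next
    case False
    then have nx: "nrm x > 0" using nrm_nonneg[OF N, of x] nrm_zero_iff[OF N, of x] by auto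
    define u where "u = (1 / nrm x) *\<^sub>R x"
    have "nrm u = 1" unfolding u_def using nx nrm_scale[OF N] by simp
    then have "nrm (M *v u) \<le> mnorm nrm M"
      unfolding mnorm_def by (intro cSup_upper[OF _ bdd]) blast
    moreover have "nrm (M *v u) = nrm (M *v x) / nrm x"
      unfolding u_def using nx nrm_scale[OF N] by (simp add: matrix_vector_mult_scaleR)
    ultimately show ?thesis using nx by (simp add: field_simps)
  qed
qed



lemma abs_entry_le: "\<bar>(M::real^'n^'m) $ (i::'m) $ (j::'n)\<bar> \<le> norm M"
  using component_le_norm_cart[of "M $ i" j] Finite_Cartesian_Product.norm_nth_le[of M i] by linarith

lemma norm_le_entries: "norm (M::real^'n^'m) \<le> (\<Sum>i\<in>UNIV. \<Sum>j\<in>UNIV. \<bar>M $ i $ j\<bar>)"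
proof -
  have "norm M \<le> (\<Sum>i\<in>UNIV. norm (M $ i))" by (simp add: norm_vec_def L2_set_le_sum)
  also have "\<dots> \<le> (\<Sum>i\<in>UNIV. \<Sum>j\<in>UNIV. \<bar>M $ i $ j\<bar>)"
    by (intro sum_mono) (rule norm_le_l1_cart)
  finally show ?thesis .
qed

lemma norm_mm_le: "norm ((A::real^'n^'n) ** (B::real^'n^'n)) \<le> real CARD('n) ^ 3 * (norm A * norm B)"
proof -
  have e: "\<bar>(A ** B) $ i $ j\<bar> \<le> real CARD('n) * (norm A * norm B)" for i j
  proof -
    have "\<bar>(A ** B) $ i $ j\<bar> = \<bar>\<Sum>k\<in>UNIV. A $ i $ k * B $ k $ j\<bar>"
      by (simp add: matrix_matrix_mult_def)
    also have "\<dots> \<le> (\<Sum>k\<in>UNIV. \<bar>A $ i $ k\<bar> * \<bar>B $ k $ j\<bar>)"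
      by (metis (no_types, lifting) abs_mult sum.cong sum_abs)
    also have "\<dots> \<le> (\<Sum>k\<in>(UNIV::'n set). norm A * norm B)"
      by (intro sum_mono mult_mono abs_entry_le) auto
    finally show ?thesis by simp
  qed
  have "norm (A ** B) \<le> (\<Sum>i\<in>UNIV. \<Sum>j\<in>UNIV. \<bar>(A ** B) $ i $ j\<bar>)" by (rule norm_le_entries)
  also have "\<dots> \<le> (\<Sum>i\<in>(UNIV::'n set). \<Sum>j\<in>(UNIV::'n set). real CARD('n) * (norm A * norm B))"
    by (intro sum_mono) (rule e)
  also have "\<dots> = real CARD('n) ^ 3 * (norm A * norm B)" by (simp add: power3_eq_cube)
  finally show ?thesis .
qed

lemma norm_mv_le: "norm ((A::real^'n^'m) *v x) \<le> real CARD('m) * (norm A * norm x)"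
proof -
  have e: "\<bar>(A *v x) $ i\<bar> \<le> norm A * norm x" for i
  proof -
    have "(A *v x) $ i = A $ i \<bullet> x" by (simp add: matrix_vector_mult_def inner_vec_def)
    then have "\<bar>(A *v x) $ i\<bar> \<le> norm (A $ i) * norm x" by (simp add: Cauchy_Schwarz_ineq2)
    also have "\<dots> \<le> norm A * norm x" by (simp add: mult_right_mono Finite_Cartesian_Product.norm_nth_le)
    finally show ?thesis .
  qed
  have "norm (A *v x) \<le> (\<Sum>i\<in>UNIV. norm ((A *v x) $ i))" using norm_le_l1_cart[of "A *v x"] by simp
  also have "\<dots> \<le> (\<Sum>i\<in>(UNIV::'m set). norm A * norm x)" using e by (intro sum_mono) simp
  finally show ?thesis by simp
qed

lemma bb_mm: "bounded_bilinear (\<lambda>(A::real^'n^'n) (B::real^'n^'n). A ** B)"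
proof
  fix a a' b b' :: "real^'n^'n" and r :: real
  show "(a + a') ** b = a ** b + a' ** b" by (simp add: vec_eq_iff matrix_matrix_mult_def sum.distrib algebra_simps)
  show "a ** (b + b') = a ** b + a ** b'" by (simp add: matrix_add_ldistrib)
  show "(r *\<^sub>R a) ** b = r *\<^sub>R (a ** b)" by (simp add: scalar_matrix_assoc)
  show "a ** (r *\<^sub>R b) = r *\<^sub>R (a ** b)" by (simp add: matrix_scalar_ac scalar_matrix_assoc)
  show "\<exists>K. \<forall>(a::real^'n^'n) (b::real^'n^'n). norm (a ** b) \<le> norm a * norm b * K"
  proof -
    have "norm (a ** b) \<le> norm a * norm b * real CARD('n) ^ 3" for a b :: "real^'n^'n"
      using norm_mm_le[of a b] by (simp add: mult_ac)
    then show ?thesis by blast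
  qed
qed

lemma bb_mv: "bounded_bilinear (\<lambda>(A::real^'n^'m) (x::real^'n). A *v x)"
proof
  fix a a' :: "real^'n^'m" and b b' :: "real^'n" and r :: real
  show "(a + a') *v b = a *v b + a' *v b" by (simp add: matrix_vector_mult_add_rdistrib)
  show "a *v (b + b') = a *v b + a *v b'" by (simp add: matrix_vector_right_distrib)
  show "(r *\<^sub>R a) *v b = r *\<^sub>R (a *v b)" by (simp add: scaleR_matrix_vector_assoc)
  show "a *v (r *\<^sub>R b) = r *\<^sub>R (a *v b)" by (simp add: matrix_vector_mult_scaleR)
  show "\<exists>K. \<forall>(a::real^'n^'m) b. norm (a *v b) \<le> norm a * norm b * K"
  proof -
    have "norm (a *v b) \<le> norm a * norm b * real CARD('m)" for a :: "real^'n^'m" and b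
      using norm_mv_le[of a b] by (simp add: mult_ac)
    then show ?thesis by blast
  qed
qed



lemma mm_diff_left: "((A::real^'n^'n) - (B::real^'n^'n)) ** (C::real^'n^'n) = A ** C - B ** C"
  by (simp add: vec_eq_iff matrix_matrix_mult_def sum_subtractf algebra_simps)
lemma mm_diff_right: "(A::real^'n^'n) ** ((B::real^'n^'n) - (C::real^'n^'n)) = A ** B - A ** C"
  by (simp add: vec_eq_iff matrix_matrix_mult_def sum_subtractf algebra_simps)

lemma dXX:
  fixes X :: "real \<Rightarrow> 'a::real_inner"
  assumes "(X has_vector_derivative V) (at t within S)"
  shows "((\<lambda>t. X t \<bullet> X t) has_real_derivative 2 * (X t \<bullet> V)) (at t within S)"
proof -
  from assms have "(X has_derivative (\<lambda>h. h *\<^sub>R V)) (at t within S)"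
    by (simp add: has_vector_derivative_def)
  then have "((\<lambda>t. X t \<bullet> X t) has_derivative (\<lambda>h. X t \<bullet> (h *\<^sub>R V) + (h *\<^sub>R V) \<bullet> X t)) (at t within S)"
    by (intro has_derivative_inner)
  then show ?thesis unfolding has_field_derivative_def
    by (rule has_derivative_eq_rhs) (auto simp: fun_eq_iff inner_commute algebra_simps)
qed

lemma lin_unique:
  fixes A X :: "real \<Rightarrow> real^'n^'n"
  assumes cA: "continuous_on {0..} A"
    and d: "\<And>t. t \<ge> 0 \<Longrightarrow> (X has_vector_derivative A t ** X t) (at t within {0..})"
    and X0: "X 0 = 0" and t1: "t1 \<ge> 0"
  shows "X t1 = 0"
proof (cases "t1 = 0")
  case True then show ?thesis using X0 by simp
next
  case False
  then have t1p: "0 < t1" using t1 by simp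
  have "compact (A ` {0..t1})"
    by (rule compact_continuous_image[OF continuous_on_subset[OF cA] compact_Icc]) auto
  then obtain B where B: "\<And>t. t \<in> {0..t1} \<Longrightarrow> norm (A t) \<le> B"
    using compact_imp_bounded bounded_iff by (metis imageI)
  have "norm (A 0) \<le> B" using B[of 0] t1 by auto
  then have B0: "0 \<le> B" using norm_ge_zero[of "A 0"] by linarith
  define K where "K = real CARD('n) ^ 3 * B"
  have K0: "0 \<le> K" unfolding K_def using B0 by simp
  define c where "c = - (2 * K)"
  define g where "g t = exp (c * t) * (X t \<bullet> X t)" for t
  define g' where "g' t = exp (c * t) * (2 * (X t \<bullet> (A t ** X t))) + exp (c * t) * c * (X t \<bullet> X t)" for t
  have dg: "(g has_real_derivative g' t) (at t within {0..t1})" if "0 \<le> t" "t \<le> t1" for t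
  proof -
    have d1: "((\<lambda>t. exp (c * t)) has_real_derivative exp (c * t) * c) (at t within {0..t1})"
      by (auto intro!: derivative_eq_intros)
    have "(X has_vector_derivative A t ** X t) (at t within {0..t1})"
      by (rule has_vector_derivative_within_subset[OF d[OF that(1)]]) auto
    then have d2: "((\<lambda>t. X t \<bullet> X t) has_real_derivative 2 * (X t \<bullet> (A t ** X t))) (at t within {0..t1})"
      by (rule dXX)
    show ?thesis unfolding g_def g'_def
      using DERIV_mult'[OF d1 d2] by (simp add: algebra_simps)
  qed
  have neg: "g' t \<le> 0" if "0 \<le> t" "t \<le> t1" for t
  proof -
    have "X t \<bullet> (A t ** X t) \<le> norm (X t) * norm (A t ** X t)" by (rule norm_cauchy_schwarz)
    also have "\<dots> \<le> norm (X t) * (real CARD('n) ^ 3 * (norm (A t) * norm (X t)))"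
      by (intro mult_left_mono norm_mm_le) simp
    also have "\<dots> \<le> norm (X t) * (real CARD('n) ^ 3 * (B * norm (X t)))"
      using B[of t] that by (intro mult_left_mono mult_right_mono) auto
    also have "\<dots> = K * (X t \<bullet> X t)" unfolding K_def by (simp add: power2_norm_eq_inner[symmetric] power2_eq_square)
    finally have "X t \<bullet> (A t ** X t) \<le> K * (X t \<bullet> X t)" .
    then have "2 * (X t \<bullet> (A t ** X t)) + c * (X t \<bullet> X t) \<le> 0" unfolding c_def by simp
    then have "exp (c * t) * (2 * (X t \<bullet> (A t ** X t)) + c * (X t \<bullet> X t)) \<le> 0"
      by (simp add: mult_nonneg_nonpos)
    then show ?thesis unfolding g'_def by (simp add: algebra_simps)
  qed
  have dg': "(g has_derivative (\<lambda>h. g' x * h)) (at x within {0..t1})" if "0 \<le> x" "x \<le> t1" for x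
    using dg[OF that] by (simp add: has_field_derivative_def)
  obtain xi where xi: "xi \<in> {0<..<t1}" "g t1 - g 0 = g' xi * (t1 - 0)"
    using mvt_simple[OF t1p dg'] by blast
  have "g' xi * t1 \<le> 0" using neg[of xi] xi(1) t1p by (simp add: mult_nonpos_nonneg)
  then have "g t1 \<le> 0" using xi X0 unfolding g_def by simp
  then have "X t1 \<bullet> X t1 \<le> 0" unfolding g_def
    by (simp add: mult_le_0_iff)
  then show ?thesis using inner_gt_zero_iff[of "X t1"] by linarith
qed

context
  fixes A :: "real \<Rightarrow> real^'n^'n" and T :: "real \<Rightarrow> real \<Rightarrow> real^'n^'n"
  assumes TM: "transition_matrix A T" and cA: "continuous_on {0..} A"
begin

lemma tm_diag: "s \<ge> 0 \<Longrightarrow> T s s = mat 1"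
  using TM unfolding transition_matrix_def by blast

lemma tm_deriv: "s \<ge> 0 \<Longrightarrow> t \<ge> 0 \<Longrightarrow> ((\<lambda>u. T u s) has_vector_derivative A t ** T t s) (at t within {0..})"
  using TM unfolding transition_matrix_def by blast

lemma tm_split:
  assumes s: "s \<ge> 0" and t: "t \<ge> 0"
  shows "T t s = T t 0 ** T 0 s"
proof -
  define X where "X u = T u s - T u 0 ** T 0 s" for u
  have "X t = 0"
  proof (rule lin_unique[OF cA _ _ t])
    fix u :: real assume u: "u \<ge> 0"
    have d1: "((\<lambda>u. T u 0 ** T 0 s) has_vector_derivative T u 0 ** 0 + (A u ** T u 0) ** T 0 s) (at u within {0..})"
      by (rule bounded_bilinear.has_vector_derivative[OF bb_mm tm_deriv[OF order_refl u] has_vector_derivative_const])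
    have "(X has_vector_derivative A u ** T u s - (A u ** T u 0) ** T 0 s) (at u within {0..})"
      unfolding X_def using has_vector_derivative_diff[OF tm_deriv[OF s u] d1] by simp
    moreover have "A u ** T u s - (A u ** T u 0) ** T 0 s = A u ** X u"
      unfolding X_def by (simp add: mm_diff_right matrix_mul_assoc)
    ultimately show "(X has_vector_derivative A u ** X u) (at u within {0..})" by simp
  next
    show "X 0 = 0" unfolding X_def using tm_diag[of 0] by simp
  qed
  then show ?thesis unfolding X_def by simp
qed

lemma tm_inv1: "s \<ge> 0 \<Longrightarrow> T s 0 ** T 0 s = mat 1"
  using tm_split[of s s] tm_diag[of s] by simp

lemma tm_inv2: "s \<ge> 0 \<Longrightarrow> T 0 s ** T s 0 = mat 1"
  using tm_inv1 matrix_left_right_inverse by blast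

lemma tm_Phi_cont: "continuous_on {0..} (\<lambda>t. T t 0)"
  unfolding continuous_on_eq_continuous_within
  using tm_deriv[OF order_refl] has_vector_derivative_continuous by blast

end

lemma inv_continuous:
  fixes Phi Psi :: "real \<Rightarrow> real^'n^'n"
  assumes cP: "continuous_on S Phi"
    and inv1: "\<And>s. s \<in> S \<Longrightarrow> Phi s ** Psi s = mat 1"
    and inv2: "\<And>s. s \<in> S \<Longrightarrow> Psi s ** Phi s = mat 1"
  shows "continuous_on S Psi"
  unfolding continuous_on_iff
proof (intro ballI allI impI)
  fix x e assume x: "x \<in> S" and e: "(0::real) < e"
  define c where "c = real CARD('n) ^ 3"
  define p where "p = norm (Psi x)"
  have c0: "c > 0" unfolding c_def by simp
  have p0: "p \<ge> 0" unfolding p_def by simp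
  define eta where "eta = min (1 / (2 * c * c * p + 1)) (e / (2 * c * c * p * p + 1))"
  have eta0: "eta > 0" unfolding eta_def using c0 p0 e by (simp add: add_nonneg_pos)
  obtain d where d0: "d > 0" and dd: "\<And>x'. x' \<in> S \<Longrightarrow> dist x' x < d \<Longrightarrow> dist (Phi x') (Phi x) < eta"
    using cP x eta0 unfolding continuous_on_iff by metis
  show "\<exists>d>0. \<forall>x'\<in>S. dist x' x < d \<longrightarrow> dist (Psi x') (Psi x) < e"
  proof (intro exI[of _ d] conjI ballI impI d0)
    fix x' assume x': "x' \<in> S" "dist x' x < d"
    define q where "q = norm (Psi x')"
    define del where "del = norm (Phi x - Phi x')"
    have del: "del < eta" using dd[OF x'] unfolding del_def by (simp add: dist_norm norm_minus_commute)
    have eq: "Psi x' - Psi x = Psi x' ** (Phi x - Phi x') ** Psi x"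
      using inv1[OF x] inv2[OF x'(1)]
      by (simp add: mm_diff_right mm_diff_left matrix_mul_assoc[symmetric])
    have bnd: "norm (Psi x' - Psi x) \<le> c * c * q * del * p"
    proof -
      have "norm (Psi x' - Psi x) \<le> c * (norm (Psi x' ** (Phi x - Phi x')) * norm (Psi x))"
        unfolding eq c_def by (rule norm_mm_le)
      also have "\<dots> \<le> c * ((c * (q * del)) * p)"
        unfolding q_def del_def p_def c_def
        by (intro mult_left_mono mult_right_mono norm_mm_le) auto
      finally show ?thesis by (simp add: algebra_simps)
    qed
    have "q \<le> p + c * c * q * del * p"
      using norm_triangle_ineq2[of "Psi x'" "Psi x"] bnd unfolding q_def p_def by linarith
    moreover have "c * c * p * del \<le> 1 / 2"
    proof -
      have "c * c * p * del \<le> c * c * p * (1 / (2 * c * c * p + 1))"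
        using del eta_def c0 p0 by (intro mult_left_mono) auto
      also have "\<dots> \<le> 1 / 2"
      proof -
        have "0 \<le> c * c * p" using c0 p0 by simp
        then show ?thesis by (simp add: field_simps)
      qed
      finally show ?thesis .
    qed
    moreover have "c * c * q * del * p = q * (c * c * p * del)" by (simp add: algebra_simps)
    moreover have "q * (c * c * p * del) \<le> q * (1 / 2)"
      by (rule mult_left_mono) (use calculation in \<open>auto simp: q_def\<close>)
    ultimately have "q \<le> p + q / 2" by linarith
    then have q2: "q \<le> 2 * p" by simp
    have "norm (Psi x' - Psi x) \<le> c * c * (2 * p) * del * p"
    proof -
      have "c * c * q * del * p = (c * c * del * p) * q" by (simp add: algebra_simps)
      also have "\<dots> \<le> (c * c * del * p) * (2 * p)"
        using q2 c0 p0 by (intro mult_left_mono) (auto simp: del_def)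
      finally show ?thesis using bnd by (simp add: algebra_simps)
    qed
    also have "\<dots> = (2 * c * c * p * p) * del" by (simp add: algebra_simps)
    also have "\<dots> \<le> (2 * c * c * p * p) * (e / (2 * c * c * p * p + 1))"
      using del eta_def c0 p0 by (intro mult_left_mono) auto
    also have "\<dots> < e"
    proof -
      have "0 \<le> 2 * c * c * p * p" using c0 p0 by simp
      then show ?thesis using e by (simp add: field_simps)
    qed
    finally show "dist (Psi x') (Psi x) < e" by (simp add: dist_norm)
  qed
qed



lemma exp_int_fwd:
  fixes C t lam :: real
  assumes "0 \<le> t" "lam > 0"
  shows "((\<lambda>s. C * exp (- lam * (t - s))) has_integral (C / lam - C * exp (- lam * t) / lam)) {0..t}"
proof -
  have "((\<lambda>s. C * exp (- lam * (t - s))) has_integral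
        ((\<lambda>s. C * exp (- lam * (t - s)) / lam) t - (\<lambda>s. C * exp (- lam * (t - s)) / lam) 0)) {0..t}"
  proof (rule fundamental_theorem_of_calculus[where f="\<lambda>s. C * exp (- lam * (t - s)) / lam" and f'="\<lambda>s. C * exp (- lam * (t - s))"])
    show "0 \<le> t" by (rule assms(1))
    fix x assume "x \<in> {0..t}"
    show "((\<lambda>s. C * exp (- lam * (t - s)) / lam) has_vector_derivative C * exp (- lam * (t - x))) (at x within {0..t})"
      unfolding has_real_derivative_iff_has_vector_derivative[symmetric]
      using assms by (auto intro!: derivative_eq_intros simp: field_simps)
  qed
  then show ?thesis by simp
qed

lemma exp_int_bwd:
  fixes C t b lam :: real
  assumes "t \<le> b" "lam > 0"
  shows "((\<lambda>s. C * exp (- lam * (s - t))) has_integral (C / lam - C * exp (- lam * (b - t)) / lam)) {t..b}"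
proof -
  have "((\<lambda>s. C * exp (- lam * (s - t))) has_integral
        ((\<lambda>s. - C * exp (- lam * (s - t)) / lam) b - (\<lambda>s. - C * exp (- lam * (s - t)) / lam) t)) {t..b}"
  proof (rule fundamental_theorem_of_calculus[where f="\<lambda>s. - C * exp (- lam * (s - t)) / lam" and f'="\<lambda>s. C * exp (- lam * (s - t))"])
    show "t \<le> b" by (rule assms(1))
    fix x assume "x \<in> {t..b}"
    show "((\<lambda>s. - C * exp (- lam * (s - t)) / lam) has_vector_derivative C * exp (- lam * (x - t))) (at x within {t..b})"
      unfolding has_real_derivative_iff_has_vector_derivative[symmetric]
      using assms by (auto intro!: derivative_eq_intros simp: field_simps)
  qed
  then show ?thesis by (simp add: field_simps)
qed

locale dich =
  fixes nrm :: "real^'n \<Rightarrow> real" and A :: "real \<Rightarrow> real^'n^'n" and T :: "real \<Rightarrow> real \<Rightarrow> real^'n^'n"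
    and P :: "real \<Rightarrow> real^'n^'n" and N lam :: real
  assumes Nrm: "is_norm nrm"
    and TM: "transition_matrix A T" and cA: "continuous_on {0..} A"
    and Pcomm: "\<And>t s. t \<ge> 0 \<Longrightarrow> s \<ge> 0 \<Longrightarrow> P t ** T t s = T t s ** P s"
    and dich1: "\<And>t s. 0 \<le> s \<Longrightarrow> s \<le> t \<Longrightarrow> mnorm nrm (T t s ** P s) \<le> N * exp (- lam * (t - s))"
    and dich2: "\<And>t s. 0 \<le> t \<Longrightarrow> t \<le> s \<Longrightarrow> mnorm nrm (T t s ** (mat 1 - P s)) \<le> N * exp (- lam * (s - t))"
    and lam0: "lam > 0" and N0: "N > 0"
begin

abbreviation "Phi t \<equiv> T t 0"
abbreviation "Psi s \<equiv> T 0 s"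

lemma inv1: "s \<ge> 0 \<Longrightarrow> Phi s ** Psi s = mat 1" using tm_inv1[OF TM cA] by blast
lemma inv2: "s \<ge> 0 \<Longrightarrow> Psi s ** Phi s = mat 1" using tm_inv2[OF TM cA] by blast
lemma split: "s \<ge> 0 \<Longrightarrow> t \<ge> 0 \<Longrightarrow> T t s = Phi t ** Psi s" using tm_split[OF TM cA] by blast
lemma Phi0: "Phi 0 = mat 1" using tm_diag[OF TM cA, of 0] by simp

lemma Phi_cont: "continuous_on {0..} Phi" using tm_Phi_cont[OF TM cA] .
lemma Psi_cont: "continuous_on {0..} Psi"
  by (rule inv_continuous[OF Phi_cont]) (auto simp: inv1 inv2)

lemma Phi_deriv: "t \<ge> 0 \<Longrightarrow> (Phi has_vector_derivative A t ** Phi t) (at t within {0..})"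
  using tm_deriv[OF TM cA, of 0 t] by simp

lemma P_repr: "s \<ge> 0 \<Longrightarrow> P s = Phi s ** P 0 ** Psi s"
proof -
  assume s: "s \<ge> 0"
  have "P s ** Phi s = Phi s ** P 0" using Pcomm[OF s order_refl] .
  then have "P s ** Phi s ** Psi s = Phi s ** P 0 ** Psi s" by simp
  then show ?thesis using inv1[OF s] by (simp add: matrix_mul_assoc[symmetric])
qed

lemma TP: "0 \<le> s \<Longrightarrow> 0 \<le> t \<Longrightarrow> T t s ** P s = Phi t ** P 0 ** Psi s"
proof -
  assume st: "0 \<le> s" "0 \<le> t"
  have "T t s ** P s = (Phi t ** Psi s) ** ((Phi s ** P 0) ** Psi s)" using split[OF st] P_repr[OF st(1)] by simp
  also have "\<dots> = Phi t ** ((Psi s ** Phi s) ** P 0) ** Psi s" by (simp add: matrix_mul_assoc)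
  also have "\<dots> = Phi t ** P 0 ** Psi s" using inv2[OF st(1)] by simp
  finally show ?thesis .
qed

lemma TQ: "0 \<le> s \<Longrightarrow> 0 \<le> t \<Longrightarrow> T t s ** (mat 1 - P s) = Phi t ** (mat 1 - P 0) ** Psi s"
proof -
  assume st: "0 \<le> s" "0 \<le> t"
  have "T t s ** (mat 1 - P s) = T t s - T t s ** P s" by (simp add: mm_diff_right)
  also have "\<dots> = Phi t ** Psi s - Phi t ** P 0 ** Psi s" using split[OF st] TP[OF st] by simp
  also have "\<dots> = Phi t ** (mat 1 - P 0) ** Psi s" by (simp add: mm_diff_right mm_diff_left)
  finally show ?thesis .
qed

lemma cont_mv:
  assumes "continuous_on S M" "continuous_on S v"
  shows "continuous_on S (\<lambda>s. (M s :: real^'n^'n) *v (v s :: real^'n))"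
  using bounded_bilinear.continuous_on[OF bb_mv assms] .

lemma fwd_bound:
  assumes t: "0 \<le> t" and cH: "continuous_on {0..t} H" and B: "\<And>s. s \<in> {0..t} \<Longrightarrow> nrm (H s) \<le> B"
  shows "nrm (integral {0..t} (\<lambda>s. (Phi t ** P 0 ** Psi s) *v H s)) \<le> N * B / lam"
proof -
  have B0: "0 \<le> B" using B[of 0] t nrm_nonneg[OF Nrm, of "H 0"] by auto
  have cg: "continuous_on {0..t} (\<lambda>s. (Phi t ** P 0 ** Psi s) *v H s)"
    by (intro cont_mv cH bounded_bilinear.continuous_on[OF bb_mm] continuous_on_const
        continuous_on_subset[OF Psi_cont]) auto
  have g: "((\<lambda>s. (Phi t ** P 0 ** Psi s) *v H s) has_integral integral {0..t} (\<lambda>s. (Phi t ** P 0 ** Psi s) *v H s)) {0..t}"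
    using integrable_continuous_interval[OF cg] by (simp add: has_integral_integral)
  have le: "nrm ((Phi t ** P 0 ** Psi s) *v H s) \<le> N * B * exp (- lam * (t - s))" if s: "s \<in> {0..t}" for s
  proof -
    have "(Phi t ** P 0 ** Psi s) = T t s ** P s" using TP[of s t] s t by simp
    then have "nrm ((Phi t ** P 0 ** Psi s) *v H s) \<le> mnorm nrm (T t s ** P s) * nrm (H s)"
      using mnorm_le[OF Nrm] by simp
    also have "\<dots> \<le> (N * exp (- lam * (t - s))) * B"
      using dich1[of s t] s B[OF s] by (intro mult_mono) (auto simp: nrm_nonneg[OF Nrm] N0 less_imp_le)
    finally show ?thesis by (simp add: algebra_simps)
  qed
  have "nrm (integral {0..t} (\<lambda>s. (Phi t ** P 0 ** Psi s) *v H s)) \<le> N * B / lam - N * B * exp (- lam * t) / lam"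
    by (rule nrm_integral_le[OF Nrm g exp_int_fwd[OF t lam0] le])
  also have "\<dots> \<le> N * B / lam" using N0 B0 lam0 by simp
  finally show ?thesis .
qed

lemma bwd_bound:
  assumes t: "0 \<le> t" "t \<le> b" and cH: "continuous_on {t..b} H" and B: "\<And>s. s \<in> {t..b} \<Longrightarrow> nrm (H s) \<le> B"
  shows "nrm (integral {t..b} (\<lambda>s. (Phi t ** (mat 1 - P 0) ** Psi s) *v H s)) \<le> N * B / lam"
proof -
  have B0: "0 \<le> B" using B[of t] t nrm_nonneg[OF Nrm, of "H t"] by auto
  have cg: "continuous_on {t..b} (\<lambda>s. (Phi t ** (mat 1 - P 0) ** Psi s) *v H s)"
    by (intro cont_mv cH bounded_bilinear.continuous_on[OF bb_mm] continuous_on_const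
        continuous_on_subset[OF Psi_cont]) (use t in auto)
  have g: "((\<lambda>s. (Phi t ** (mat 1 - P 0) ** Psi s) *v H s) has_integral integral {t..b} (\<lambda>s. (Phi t ** (mat 1 - P 0) ** Psi s) *v H s)) {t..b}"
    using integrable_continuous_interval[OF cg] by (simp add: has_integral_integral)
  have le: "nrm ((Phi t ** (mat 1 - P 0) ** Psi s) *v H s) \<le> N * B * exp (- lam * (s - t))" if s: "s \<in> {t..b}" for s
  proof -
    have "(Phi t ** (mat 1 - P 0) ** Psi s) = T t s ** (mat 1 - P s)" using TQ[of s t] s t by simp
    then have "nrm ((Phi t ** (mat 1 - P 0) ** Psi s) *v H s) \<le> mnorm nrm (T t s ** (mat 1 - P s)) * nrm (H s)"
      using mnorm_le[OF Nrm] by simp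
    also have "\<dots> \<le> (N * exp (- lam * (s - t))) * B"
      using dich2[of t s] s t B[OF s] by (intro mult_mono) (auto simp: nrm_nonneg[OF Nrm] N0 less_imp_le)
    finally show ?thesis by (simp add: algebra_simps)
  qed
  have "nrm (integral {t..b} (\<lambda>s. (Phi t ** (mat 1 - P 0) ** Psi s) *v H s)) \<le> N * B / lam - N * B * exp (- lam * (b - t)) / lam"
    by (rule nrm_integral_le[OF Nrm g exp_int_bwd[OF t(2) lam0] le])
  also have "\<dots> \<le> N * B / lam" using N0 B0 lam0 by simp
  finally show ?thesis .
qed

end


locale constr = dich nrm A T P N lam
  for nrm :: "real^'n \<Rightarrow> real" and A T P N lam +
  fixes F :: "real \<Rightarrow> real^'n \<Rightarrow> real^'n" and J :: "real set" and B :: real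
  assumes J0: "0 \<in> J" and Jsub: "J \<subseteq> {0..}"
    and Jdown: "\<And>t s. t \<in> J \<Longrightarrow> 0 \<le> s \<Longrightarrow> s \<le> t \<Longrightarrow> s \<in> J"
    and cF: "continuous_on (J \<times> UNIV) (\<lambda>p. F (fst p) (snd p))"
    and bF: "\<And>t x. t \<in> J \<Longrightarrow> nrm (F t x) \<le> B"
    and B0: "0 \<le> B"
begin

lemma Icc_J: "b \<in> J \<Longrightarrow> {0..b} \<subseteq> J" using Jdown by auto

lemma F_comp:
  assumes "continuous_on S a" "continuous_on S w" "a ` S \<subseteq> J"
  shows "continuous_on S (\<lambda>s. F (a s) (w s))"
proof -
  have "continuous_on S (\<lambda>s. (\<lambda>p. F (fst p) (snd p)) (a s, w s))"
    by (rule continuous_on_compose2[OF cF continuous_on_Pair[OF assms(1,2)]]) (use assms(3) in auto)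
  then show ?thesis by simp
qed

lemma F_isCont: "t \<in> J \<Longrightarrow> isCont (F t) x"
proof -
  assume t: "t \<in> J"
  have "continuous_on UNIV (\<lambda>x. F ((\<lambda>_. t) x) ((\<lambda>x. x) x))"
    by (rule F_comp) (use t in \<open>auto intro: continuous_on_const continuous_on_id\<close>)
  then show ?thesis by (simp add: continuous_on_eq_continuous_at)
qed

lemma Psi_bounded: "\<exists>M. \<forall>s\<in>{0..b}. norm (Psi s) \<le> M"
proof -
  have "compact (Psi ` {0..b})"
    by (rule compact_continuous_image[OF continuous_on_subset[OF Psi_cont] compact_Icc]) auto
  then show ?thesis using compact_imp_bounded bounded_iff by (metis imageI)
qed

lemma Phi_bounded: "\<exists>M. \<forall>s\<in>{0..b}. norm (Phi s) \<le> M"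
proof -
  have "compact (Phi ` {0..b})"
    by (rule compact_continuous_image[OF continuous_on_subset[OF Phi_cont] compact_Icc]) auto
  then show ?thesis using compact_imp_bounded bounded_iff by (metis imageI)
qed

lemma integrand_bound:
  assumes b: "b \<in> J"
  obtains M where "0 \<le> M" "\<And>s x. s \<in> {0..b} \<Longrightarrow> norm (Psi s *v F s x) \<le> M"
proof -
  obtain M1 where M1: "\<And>s. s \<in> {0..b} \<Longrightarrow> norm (Psi s) \<le> M1" using Psi_bounded by blast
  obtain D where D: "D > 0" "\<And>x. norm x \<le> D * nrm x" using nrm_lower[OF Nrm] by blast
  define M where "M = real CARD('n) * (\<bar>M1\<bar> * (D * B))"
  show ?thesis
  proof (rule that[of M])
    show "0 \<le> M" unfolding M_def using D B0 by simp
    fix s x assume s: "s \<in> {0..b}"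
    have "norm (Psi s *v F s x) \<le> real CARD('n) * (norm (Psi s) * norm (F s x))" by (rule norm_mv_le)
    also have "\<dots> \<le> real CARD('n) * (\<bar>M1\<bar> * (D * B))"
    proof -
      have "norm (F s x) \<le> D * B"
        using D(2)[of "F s x"] bF[of s x] Icc_J[OF b] s D(1)
        by (meson mult_left_mono less_imp_le order_trans subsetD)
      moreover have "norm (Psi s) \<le> \<bar>M1\<bar>" using M1[OF s] by linarith
      ultimately show ?thesis by (intro mult_left_mono mult_mono) auto
    qed
    finally show "norm (Psi s *v F s x) \<le> M" unfolding M_def .
  qed
qed

definition V :: "real \<Rightarrow> real^'n \<Rightarrow> (real \<Rightarrow> real^'n) \<Rightarrow> real \<Rightarrow> real^'n" where
  "V h \<xi> z t = Phi t *v (\<xi> + integral {0..t} (\<lambda>s. Psi s *v F s (z (max 0 (s - h)))))"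

definition zit :: "real \<Rightarrow> real^'n \<Rightarrow> nat \<Rightarrow> real \<Rightarrow> real^'n" where
  "zit h \<xi> k = (V h \<xi> ^^ k) (\<lambda>_. \<xi>)"

lemma zit_0: "zit h \<xi> 0 = (\<lambda>_. \<xi>)" unfolding zit_def by simp
lemma zit_Suc: "zit h \<xi> (Suc k) = V h \<xi> (zit h \<xi> k)" unfolding zit_def by simp

lemma integrand_cont:
  assumes b: "b \<in> J" and h: "h > 0" and cz: "continuous_on {0..b} z"
  shows "continuous_on {0..b} (\<lambda>s. Psi s *v F s (z (max 0 (s - h))))"
proof -
  have cm: "continuous_on {0..b} (\<lambda>s. max 0 (s - h))"
    by (intro continuous_intros)
  have im: "(\<lambda>s. max 0 (s - h)) ` {0..b} \<subseteq> {0..b}" using h by auto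
  have "continuous_on {0..b} (\<lambda>s. z (max 0 (s - h)))"
    by (rule continuous_on_compose2[OF cz cm im])
  then have "continuous_on {0..b} (\<lambda>s. F s (z (max 0 (s - h))))"
    by (intro F_comp continuous_on_id) (use Icc_J[OF b] in auto)
  then show ?thesis
    by (intro cont_mv continuous_on_subset[OF Psi_cont]) auto
qed

lemma indef_cont:
  fixes g :: "real \<Rightarrow> real^'n" and b :: real
  assumes "continuous_on {0..b} g"
  shows "continuous_on {0..b} (\<lambda>t. integral {0..t} g)"
  unfolding continuous_on_eq_continuous_within
  using integral_has_vector_derivative[OF assms] has_vector_derivative_continuous by blast

lemma V_cont:
  assumes b: "b \<in> J" and h: "h > 0" and cz: "continuous_on {0..b} z"
  shows "continuous_on {0..b} (V h \<xi> z)"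
  unfolding V_def
  by (intro cont_mv continuous_on_subset[OF Phi_cont] continuous_on_add continuous_on_const
      indef_cont integrand_cont[OF b h cz]) auto

lemma zit_cont:
  assumes b: "b \<in> J" and h: "h > 0"
  shows "continuous_on {0..b} (zit h \<xi> k)"
proof (induction k)
  case 0 then show ?case by (simp add: zit_0)
next
  case (Suc k) then show ?case by (simp add: zit_Suc V_cont[OF b h])
qed

lemma zit_agree:
  assumes b: "b \<in> J" and h: "h > 0"
  shows "\<And>t. 0 \<le> t \<Longrightarrow> t \<le> b \<Longrightarrow> t \<le> real k * h \<Longrightarrow> zit h \<xi> (Suc k) t = zit h \<xi> k t"
proof (induction k)
  case 0
  then have "t = 0" by simp
  then show ?case by (simp add: zit_Suc zit_0 V_def Phi0)
next
  case (Suc k)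
  have "integral {0..t} (\<lambda>s. Psi s *v F s (zit h \<xi> (Suc k) (max 0 (s - h))))
      = integral {0..t} (\<lambda>s. Psi s *v F s (zit h \<xi> k (max 0 (s - h))))"
  proof (rule integral_cong)
    fix s assume s: "s \<in> {0..t}"
    have "max 0 (s - h) \<le> real k * h" using s Suc.prems h by (auto simp: algebra_simps)
    moreover have "max 0 (s - h) \<le> b" using s Suc.prems h by auto
    ultimately have "zit h \<xi> (Suc k) (max 0 (s - h)) = zit h \<xi> k (max 0 (s - h))"
      using Suc.IH by simp
    then show "Psi s *v F s (zit h \<xi> (Suc k) (max 0 (s - h))) = Psi s *v F s (zit h \<xi> k (max 0 (s - h)))"
      by simp
  qed
  then show ?case by (simp add: zit_Suc[of h \<xi> "Suc k"] zit_Suc[of h \<xi> k] V_def)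
qed

definition Kh :: "real \<Rightarrow> real \<Rightarrow> nat" where "Kh b h = nat \<lceil>b / h\<rceil>"

lemma Kh_ge: "h > 0 \<Longrightarrow> b \<le> real (Kh b h) * h"
proof -
  assume h: "h > 0"
  have "b / h \<le> real (nat \<lceil>b / h\<rceil>)" by linarith
  then show ?thesis unfolding Kh_def using h by (simp add: field_simps)
qed

definition Zf :: "real \<Rightarrow> real \<Rightarrow> real^'n \<Rightarrow> real \<Rightarrow> real^'n" where
  "Zf b h \<xi> = zit h \<xi> (Kh b h)"

lemma Zf_fix:
  assumes b: "b \<in> J" and h: "h > 0" and t: "t \<in> {0..b}"
  shows "V h \<xi> (Zf b h \<xi>) t = Zf b h \<xi> t"
  unfolding Zf_def zit_Suc[symmetric]
  using zit_agree[OF b h, of t "Kh b h"] t Kh_ge[OF h, of b] by auto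

lemma Zf_cont: "b \<in> J \<Longrightarrow> h > 0 \<Longrightarrow> continuous_on {0..b} (Zf b h \<xi>)"
  unfolding Zf_def by (rule zit_cont)

end


context constr begin

lemma mv_tendsto: "(f \<longlongrightarrow> l) F' \<Longrightarrow> ((\<lambda>x. (M::real^'n^'n) *v f x) \<longlongrightarrow> M *v l) F'"
  by (rule bounded_linear.tendsto[OF matrix_vector_mul_bounded_linear])

lemma dct_step:
  assumes b: "b \<in> J" and h: "h > 0" and t: "t \<in> {0..b}"
    and cz: "\<And>m. continuous_on {0..b} (zs m)" and cz0: "continuous_on {0..b} z"
    and conv: "\<And>u. u \<in> {0..b} \<Longrightarrow> (\<lambda>m. zs m u) \<longlonglongrightarrow> z u"
  shows "(\<lambda>m. integral {0..t} (\<lambda>s. Psi s *v F s (zs m (max 0 (s - h)))))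
           \<longlonglongrightarrow> integral {0..t} (\<lambda>s. Psi s *v F s (z (max 0 (s - h))))"
proof -
  obtain M where M: "0 \<le> M" "\<And>s x. s \<in> {0..b} \<Longrightarrow> norm (Psi s *v F s x) \<le> M"
    using integrand_bound[OF b] by blast
  have sub: "{0..t} \<subseteq> {0..b}" using t by auto
  show ?thesis
  proof (rule dominated_convergence(2))
    show "(\<lambda>s. Psi s *v F s (zs m (max 0 (s - h)))) integrable_on {0..t}" for m
      by (rule integrable_continuous_interval[OF continuous_on_subset[OF integrand_cont[OF b h cz] sub]])
    show "(\<lambda>s. M) integrable_on {0..t}"
      by (rule integrable_continuous_interval[OF continuous_on_const])
    show "norm (Psi s *v F s (zs m (max 0 (s - h)))) \<le> M" if "s \<in> {0..t}" for m s
      using M(2)[of s] that sub by auto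
    show "(\<lambda>m. Psi s *v F s (zs m (max 0 (s - h)))) \<longlonglongrightarrow> Psi s *v F s (z (max 0 (s - h)))"
      if s: "s \<in> {0..t}" for s
    proof -
      have u: "max 0 (s - h) \<in> {0..b}" using s t h by auto
      have "s \<in> J" using s sub Icc_J[OF b] by auto
      then have "(\<lambda>m. F s (zs m (max 0 (s - h)))) \<longlonglongrightarrow> F s (z (max 0 (s - h)))"
        using isCont_tendsto_compose[OF F_isCont conv[OF u]] by blast
      then show ?thesis by (rule mv_tendsto)
    qed
  qed
qed

lemma zit_seq:
  assumes b: "b \<in> J" and h: "h > 0" and xs: "xs \<longlonglongrightarrow> \<xi>"
  shows "\<And>t. t \<in> {0..b} \<Longrightarrow> (\<lambda>m. zit h (xs m) k t) \<longlonglongrightarrow> zit h \<xi> k t"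
proof (induction k)
  case 0 then show ?case using xs by (simp add: zit_0)
next
  case (Suc k)
  have "(\<lambda>m. integral {0..t} (\<lambda>s. Psi s *v F s (zit h (xs m) k (max 0 (s - h)))))
           \<longlonglongrightarrow> integral {0..t} (\<lambda>s. Psi s *v F s (zit h \<xi> k (max 0 (s - h))))"
    by (rule dct_step[OF b h Suc.prems zit_cont[OF b h] zit_cont[OF b h] Suc.IH])
  then have "(\<lambda>m. Phi t *v (xs m + integral {0..t} (\<lambda>s. Psi s *v F s (zit h (xs m) k (max 0 (s - h))))))
      \<longlonglongrightarrow> Phi t *v (\<xi> + integral {0..t} (\<lambda>s. Psi s *v F s (zit h \<xi> k (max 0 (s - h)))))"
    by (intro mv_tendsto tendsto_add xs)
  then show ?case by (simp add: zit_Suc V_def)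
qed

definition G :: "real \<Rightarrow> real \<Rightarrow> real^'n \<Rightarrow> real^'n" where
  "G b h \<xi> = - ((mat 1 - P 0) *v integral {0..b} (\<lambda>s. Psi s *v F s (Zf b h \<xi> (max 0 (s - h)))))"

lemma G_seq:
  assumes b: "b \<in> J" and h: "h > 0" and xs: "xs \<longlonglongrightarrow> \<xi>"
  shows "(\<lambda>m. G b h (xs m)) \<longlonglongrightarrow> G b h \<xi>"
proof -
  have b0: "b \<in> {0..b}" using b Jsub by auto
  have "(\<lambda>m. integral {0..b} (\<lambda>s. Psi s *v F s (Zf b h (xs m) (max 0 (s - h)))))
           \<longlonglongrightarrow> integral {0..b} (\<lambda>s. Psi s *v F s (Zf b h \<xi> (max 0 (s - h))))"
    unfolding Zf_def
    by (rule dct_step[OF b h b0 zit_cont[OF b h] zit_cont[OF b h] zit_seq[OF b h xs]])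
  then show ?thesis unfolding G_def by (intro tendsto_minus mv_tendsto)
qed

lemma nrm_neg_le: "nrm (- x) = nrm x" using nrm_minus[OF Nrm] .

lemma G_bound:
  assumes b: "b \<in> J" and h: "h > 0"
  shows "nrm (G b h \<xi>) \<le> N * B / lam"
proof -
  define H where "H s = F s (Zf b h \<xi> (max 0 (s - h)))" for s
  have cH: "continuous_on {0..b} H"
  proof -
    have cm: "continuous_on {0..b} (\<lambda>s. max 0 (s - h))" by (intro continuous_intros)
    have "continuous_on {0..b} (\<lambda>s. Zf b h \<xi> (max 0 (s - h)))"
      by (rule continuous_on_compose2[OF Zf_cont[OF b h] cm]) (use h in auto)
    then show ?thesis unfolding H_def
      by (intro F_comp continuous_on_id) (use Icc_J[OF b] in auto)
  qed
  have bH: "nrm (H s) \<le> B" if "s \<in> {0..b}" for s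
    unfolding H_def using bF Icc_J[OF b] that by auto
  have cg: "continuous_on {0..b} (\<lambda>s. Psi s *v H s)"
    by (intro cont_mv cH continuous_on_subset[OF Psi_cont]) auto
  have "(mat 1 - P 0) *v integral {0..b} (\<lambda>s. Psi s *v H s)
      = integral {0..b} (\<lambda>s. (mat 1 - P 0) *v (Psi s *v H s))"
    using integral_linear[OF integrable_continuous_interval[OF cg] matrix_vector_mul_bounded_linear[of "mat 1 - P 0"]]
    by (simp add: o_def)
  also have "\<dots> = integral {0..b} (\<lambda>s. (Phi 0 ** (mat 1 - P 0) ** Psi s) *v H s)"
    by (simp add: Phi0 matrix_vector_mul_assoc)
  finally have eq: "(mat 1 - P 0) *v integral {0..b} (\<lambda>s. Psi s *v H s) = \<dots>" .
  have "nrm (integral {0..b} (\<lambda>s. (Phi 0 ** (mat 1 - P 0) ** Psi s) *v H s)) \<le> N * B / lam"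
    by (rule bwd_bound[OF order_refl _ cH bH]) (use b Jsub in auto)
  then show ?thesis unfolding G_def H_def[symmetric] using eq nrm_neg_le by simp
qed

definition Sb :: "(real^'n) set" where "Sb = {x. nrm x \<le> N * B / lam}"

lemma R0: "0 \<le> N * B / lam" using N0 B0 lam0 by simp

lemma Sb_compact: "compact Sb"
proof -
  obtain D where D: "D > 0" "\<And>x. norm x \<le> D * nrm x" using nrm_lower[OF Nrm] by blast
  have "bounded Sb"
    unfolding bounded_iff Sb_def
  proof (intro exI[of _ "D * (N * B / lam)"] ballI)
    fix x assume "x \<in> {x. nrm x \<le> N * B / lam}"
    then have nx: "nrm x \<le> N * B / lam" by simp
    show "norm x \<le> D * (N * B / lam)" using D(2)[of x] mult_left_mono[OF nx, of D] D(1) by linarith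
  qed
  moreover have "closed Sb" unfolding Sb_def
    by (rule closed_Collect_le[OF nrm_continuous[OF Nrm] continuous_on_const])
  ultimately show ?thesis by (simp add: compact_eq_bounded_closed)
qed

lemma Sb_convex: "convex Sb"
  unfolding convex_def Sb_def
proof (intro ballI allI impI, clarsimp)
  fix x y :: "real^'n" and u v :: real
  assume x: "nrm x \<le> N * B / lam" and y: "nrm y \<le> N * B / lam" and uv: "0 \<le> u" "0 \<le> v" "u + v = 1"
  have "nrm (u *\<^sub>R x + v *\<^sub>R y) \<le> u * nrm x + v * nrm y"
    using nrm_tri[OF Nrm, of "u *\<^sub>R x" "v *\<^sub>R y"] nrm_scale[OF Nrm] uv by simp
  also have "\<dots> \<le> u * (N * B / lam) + v * (N * B / lam)"
    using x y uv by (intro add_mono mult_left_mono) auto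
  also have "\<dots> = (u + v) * (N * B / lam)" by (simp only: distrib_right)
  also have "\<dots> = N * B / lam" using uv(3) by simp
  finally show "nrm (u *\<^sub>R x + v *\<^sub>R y) \<le> N * B / lam" .
qed

lemma G_fix:
  assumes b: "b \<in> J" and h: "h > 0"
  obtains \<xi> where "G b h \<xi> = \<xi>"
proof -
  have "0 \<in> Sb" unfolding Sb_def using R0 nrm_0[OF Nrm] by simp
  then have ne: "Sb \<noteq> {}" by blast
  have cG: "continuous_on Sb (G b h)"
    by (rule continuous_on_sequentiallyI) (rule G_seq[OF b h])
  have im: "G b h \<in> Sb \<rightarrow> Sb" unfolding Sb_def using G_bound[OF b h] by auto
  obtain x where "x \<in> Sb" "G b h x = x" using brouwer[OF Sb_compact Sb_convex ne cG im] by blast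
  then show ?thesis using that by blast
qed

lemma FH:
  assumes b: "b \<in> J" and h: "h > 0"
  shows "\<exists>z. continuous_on {0..b} z \<and> (\<forall>t\<in>{0..b}. nrm (z t) \<le> 2 * N * B / lam) \<and>
             (\<forall>t\<in>{0..b}. z t = Phi t *v (z 0 + integral {0..t} (\<lambda>s. Psi s *v F s (z (max 0 (s - h))))))"
proof -
  obtain \<xi> where fx: "G b h \<xi> = \<xi>" using G_fix[OF b h] by blast
  define z where "z = Zf b h \<xi>"
  have b0: "0 \<le> b" using b Jsub by auto
  have eqV: "z t = V h \<xi> z t" if "t \<in> {0..b}" for t
    unfolding z_def using Zf_fix[OF b h that] by simp
  have z0: "z 0 = \<xi>" using eqV[of 0] b0 by (simp add: V_def Phi0)
  define H where "H s = F s (z (max 0 (s - h)))" for s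
  have cH: "continuous_on {0..b} H"
  proof -
    have cm: "continuous_on {0..b} (\<lambda>s. max 0 (s - h))" by (intro continuous_intros)
    have "continuous_on {0..b} (\<lambda>s. z (max 0 (s - h)))"
      unfolding z_def by (rule continuous_on_compose2[OF Zf_cont[OF b h] cm]) (use h in auto)
    then show ?thesis unfolding H_def
      by (intro F_comp continuous_on_id) (use Icc_J[OF b] in auto)
  qed
  have bH: "nrm (H s) \<le> B" if "s \<in> {0..b}" for s
    unfolding H_def using bF Icc_J[OF b] that by auto
  define g where "g s = Psi s *v H s" for s
  have cg: "continuous_on {0..b} g"
    unfolding g_def by (intro cont_mv cH continuous_on_subset[OF Psi_cont]) auto
  have bnd: "nrm (z t) \<le> 2 * N * B / lam" if t: "t \<in> {0..b}" for t
  proof -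
    define Q where "Q = mat 1 - P 0"
    have sub1: "{0..t} \<subseteq> {0..b}" and sub2: "{t..b} \<subseteq> {0..b}" using t by auto
    have ig1: "g integrable_on {0..t}" by (rule integrable_continuous_interval[OF continuous_on_subset[OF cg sub1]])
    have ig2: "g integrable_on {t..b}" by (rule integrable_continuous_interval[OF continuous_on_subset[OF cg sub2]])
    have comb: "integral {0..t} g + integral {t..b} g = integral {0..b} g"
      using Henstock_Kurzweil_Integration.integral_combine[where a=0 and c=t and b=b and f=g] t integrable_continuous_interval[OF cg] by auto
    have xi: "\<xi> = - (Q *v integral {0..b} g)"
      using fx unfolding G_def Q_def g_def H_def z_def[symmetric] by simp
    have Qv: "Q *v x = x - P 0 *v x" for x unfolding Q_def by (simp add: matrix_vector_mult_diff_rdistrib)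
    have "z t = Phi t *v (\<xi> + integral {0..t} g)"
      using eqV[OF t] unfolding V_def g_def H_def by simp
    also have "\<xi> + integral {0..t} g = P 0 *v integral {0..t} g - Q *v integral {t..b} g"
    proof -
      define a where "a = integral {0..t} g"
      define c where "c = integral {t..b} g"
      have "Q *v (a + c) = (a - P 0 *v a) + Q *v c" by (simp only: matrix_vector_right_distrib Qv)
      then have "- (Q *v (a + c)) + a = P 0 *v a - Q *v c" by (simp add: algebra_simps)
      then show ?thesis unfolding xi comb[symmetric] a_def[symmetric] c_def[symmetric] by simp
    qed
    finally have "z t = (Phi t ** P 0) *v integral {0..t} g - (Phi t ** Q) *v integral {t..b} g"
      by (simp add: matrix_vector_mult_diff_distrib matrix_vector_mul_assoc)
    also have "(Phi t ** P 0) *v integral {0..t} g = integral {0..t} (\<lambda>s. (Phi t ** P 0 ** Psi s) *v H s)"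
      using integral_linear[OF ig1 matrix_vector_mul_bounded_linear[of "Phi t ** P 0"]]
      by (simp add: o_def g_def matrix_vector_mul_assoc)
    also have "(Phi t ** Q) *v integral {t..b} g = integral {t..b} (\<lambda>s. (Phi t ** (mat 1 - P 0) ** Psi s) *v H s)"
      using integral_linear[OF ig2 matrix_vector_mul_bounded_linear[of "Phi t ** Q"]]
      by (simp add: o_def g_def matrix_vector_mul_assoc Q_def)
    finally have zt: "z t = integral {0..t} (\<lambda>s. (Phi t ** P 0 ** Psi s) *v H s)
                         - integral {t..b} (\<lambda>s. (Phi t ** (mat 1 - P 0) ** Psi s) *v H s)" .
    have n1: "nrm (integral {0..t} (\<lambda>s. (Phi t ** P 0 ** Psi s) *v H s)) \<le> N * B / lam"
      using t by (intro fwd_bound continuous_on_subset[OF cH] bH) auto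
    have n2: "nrm (integral {t..b} (\<lambda>s. (Phi t ** (mat 1 - P 0) ** Psi s) *v H s)) \<le> N * B / lam"
      using t by (intro bwd_bound continuous_on_subset[OF cH] bH) auto
    have "nrm (z t) \<le> nrm (integral {0..t} (\<lambda>s. (Phi t ** P 0 ** Psi s) *v H s))
                  + nrm (- integral {t..b} (\<lambda>s. (Phi t ** (mat 1 - P 0) ** Psi s) *v H s))"
      (is "_ \<le> ?a + nrm (- ?c)")
      unfolding zt diff_conv_add_uminus by (rule nrm_tri[OF Nrm])
    also have "?a + nrm (- ?c) = ?a + nrm ?c" by (simp only: nrm_neg_le)
    also have "\<dots> \<le> N * B / lam + N * B / lam" using n1 n2 by (rule add_mono)
    also have "\<dots> = 2 * N * B / lam" by (simp add: field_simps)
    finally show ?thesis .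
  qed
  show ?thesis
  proof (intro exI[of _ z] conjI ballI)
    show "continuous_on {0..b} z" unfolding z_def by (rule Zf_cont[OF b h])
    show "nrm (z t) \<le> 2 * N * B / lam" if "t \<in> {0..b}" for t using bnd[OF that] .
    show "z t = Phi t *v (z 0 + integral {0..t} (\<lambda>s. Psi s *v F s (z (max 0 (s - h)))))" if "t \<in> {0..b}" for t
      using eqV[OF that] z0 unfolding V_def by simp
  qed
qed

end


context dich begin

lemma ivp_deriv:
  fixes g :: "real \<Rightarrow> real^'n"
  assumes b: "0 \<le> b" and cg: "continuous_on {0..b} g" and t: "t \<in> {0..b}"
  shows "((\<lambda>t. Phi t *v (c + integral {0..t} g)) has_vector_derivative
           A t *v (Phi t *v (c + integral {0..t} g)) + Phi t *v g t) (at t within {0..b})"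
proof -
  have d1: "(Phi has_vector_derivative A t ** Phi t) (at t within {0..b})"
    by (rule has_vector_derivative_within_subset[OF Phi_deriv]) (use t in auto)
  have d2: "((\<lambda>t. c + integral {0..t} g) has_vector_derivative g t) (at t within {0..b})"
    using has_vector_derivative_add[OF has_vector_derivative_const integral_has_vector_derivative[OF cg t]]
    by simp
  show ?thesis
    using bounded_bilinear.has_vector_derivative[OF bb_mv d1 d2]
    by (simp add: matrix_vector_mul_assoc add.commute)
qed

end

lemma loc_J:
  fixes J :: "real set"
  assumes Jsub: "J \<subseteq> {0..}" and Jdown: "\<And>t s. t \<in> J \<Longrightarrow> 0 \<le> s \<Longrightarrow> s \<le> t \<Longrightarrow> s \<in> J"
    and t: "t \<in> J"
  obtains b where "b \<in> J" "t \<le> b" "at t within J = at t within {0..b}"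
proof (cases "\<exists>b\<in>J. t < b")
  case True
  then obtain b where b: "b \<in> J" "t < b" by blast
  have "at t within J = at t within {0..b}"
  proof (rule at_within_nhd[of t "{t - 1 <..< b}"])
    show "t \<in> {t - 1 <..< b}" using b by simp
    show "open {t - 1 <..< b}" by simp
    show "J \<inter> {t - 1<..<b} - {t} = {0..b} \<inter> {t - 1<..<b} - {t}"
      using Jsub Jdown[OF b(1)] by force
  qed
  then show ?thesis using that b by auto
next
  case False
  then have "J = {0..t}" using Jsub Jdown[OF t] t by force
  then show ?thesis using that t by auto
qed

locale constr2 = constr nrm A T P N lam F J B
  for nrm :: "real^'n \<Rightarrow> real" and A T P N lam F J B +
  fixes Ts :: "nat \<Rightarrow> real"
  assumes TsJ: "\<And>k. Ts k \<in> J" and Tsmono: "mono Ts"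
    and TsEx: "\<And>t. t \<in> J \<Longrightarrow> \<exists>k. t \<le> Ts k"
begin

definition hk :: "nat \<Rightarrow> real" where "hk k = 1 / (real k + 1)"
lemma hk_pos: "hk k > 0" unfolding hk_def by simp
lemma hk_lim: "hk \<longlonglongrightarrow> 0"
  unfolding hk_def using LIMSEQ_inverse_real_of_nat by (simp add: inverse_eq_divide add.commute)

definition R2 where "R2 = 2 * N * B / lam"

definition good :: "nat \<Rightarrow> (real \<Rightarrow> real^'n) \<Rightarrow> bool" where
  "good k z \<longleftrightarrow> continuous_on {0..Ts k} z \<and> (\<forall>t\<in>{0..Ts k}. nrm (z t) \<le> R2) \<and>
      (\<forall>t\<in>{0..Ts k}. z t = Phi t *v (z 0 + integral {0..t} (\<lambda>s. Psi s *v F s (z (max 0 (s - hk k))))))"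

lemma approx: obtains zs where "\<And>k. good k (zs k)"
proof -
  have "\<forall>k. \<exists>z. good k z" unfolding good_def R2_def using FH[OF TsJ hk_pos] by blast
  then show ?thesis using that by metis
qed

end


locale constr3 = constr2 nrm A T P N lam F J B Ts
  for nrm :: "real^'n \<Rightarrow> real" and A T P N lam F J B Ts +
  fixes zs :: "nat \<Rightarrow> real \<Rightarrow> real^'n"
  assumes zs_good: "\<And>k. good k (zs k)"
begin

lemma Ts0: "0 \<le> Ts k" using TsJ[of k] Jsub by auto

lemma zs_cont: "continuous_on {0..Ts k} (zs k)" using zs_good[of k] unfolding good_def by blast
lemma zs_bnd: "t \<in> {0..Ts k} \<Longrightarrow> nrm (zs k t) \<le> R2" using zs_good[of k] unfolding good_def by blast
lemma zs_eq: "t \<in> {0..Ts k} \<Longrightarrow> zs k t = Phi t *v (zs k 0 + integral {0..t} (\<lambda>s. Psi s *v F s (zs k (max 0 (s - hk k)))))"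
  using zs_good[of k] unfolding good_def by blast

definition w :: "nat \<Rightarrow> real \<Rightarrow> real^'n" where "w k t = zs k (min t (Ts k))"

lemma w_eq: "0 \<le> t \<Longrightarrow> t \<le> Ts k \<Longrightarrow> w k t = zs k t" unfolding w_def by simp

lemma w_cont: "continuous_on {0..} (w k)"
  unfolding w_def
  by (rule continuous_on_compose2[OF zs_cont]) (auto intro!: continuous_intros simp: Ts0)

lemma w_bnd: "0 \<le> t \<Longrightarrow> nrm (w k t) \<le> R2"
  unfolding w_def using zs_bnd Ts0[of k] by auto

lemma R2_0: "0 \<le> R2" unfolding R2_def using N0 B0 lam0 by simp

lemma zs_deriv:
  assumes t: "t \<in> {0..Ts k}"
  shows "(zs k has_vector_derivative A t *v zs k t + F t (zs k (max 0 (t - hk k)))) (at t within {0..Ts k})"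
proof -
  define g where "g s = Psi s *v F s (zs k (max 0 (s - hk k)))" for s
  have cg: "continuous_on {0..Ts k} g"
    unfolding g_def by (rule integrand_cont[OF TsJ hk_pos zs_cont])
  have d: "((\<lambda>t. Phi t *v (zs k 0 + integral {0..t} g)) has_vector_derivative
           A t *v (Phi t *v (zs k 0 + integral {0..t} g)) + Phi t *v g t) (at t within {0..Ts k})"
    by (rule ivp_deriv[OF Ts0 cg t])
  have e1: "Phi t *v (zs k 0 + integral {0..t} g) = zs k t" using zs_eq[OF t] unfolding g_def by simp
  have e2: "Phi t *v g t = F t (zs k (max 0 (t - hk k)))"
    unfolding g_def using inv1[of t] t by (simp add: matrix_vector_mul_assoc)
  show ?thesis
  proof (rule has_vector_derivative_transform[OF t])
    show "zs k x = Phi x *v (zs k 0 + integral {0..x} g)" if "x \<in> {0..Ts k}" for x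
      using zs_eq[OF that] unfolding g_def by simp
    show "((\<lambda>x. Phi x *v (zs k 0 + integral {0..x} g)) has_vector_derivative
         A t *v zs k t + F t (zs k (max 0 (t - hk k)))) (at t within {0..Ts k})"
      using d unfolding e1 e2 .
  qed
qed

lemma A_bounded: "\<exists>M. \<forall>s\<in>{0..b}. norm (A s) \<le> M"
proof -
  have "compact (A ` {0..b})"
    by (rule compact_continuous_image[OF continuous_on_subset[OF cA] compact_Icc]) auto
  then show ?thesis using compact_imp_bounded bounded_iff by (metis imageI)
qed

lemma zs_lip:
  obtains L where "L > 0" "\<And>k x y. x \<in> {0..min (Ts i) (Ts k)} \<Longrightarrow> y \<in> {0..min (Ts i) (Ts k)} \<Longrightarrow>
     norm (zs k x - zs k y) \<le> L * \<bar>x - y\<bar>"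
proof -
  obtain MA where MA: "\<And>s. s \<in> {0..Ts i} \<Longrightarrow> norm (A s) \<le> MA" using A_bounded by blast
  obtain D where D: "D > 0" "\<And>x. norm x \<le> D * nrm x" using nrm_lower[OF Nrm] by blast
  define M where "M = real CARD('n) * (\<bar>MA\<bar> * (D * R2)) + D * B"
  have M0: "0 \<le> M" unfolding M_def using D R2_0 B0 by simp
  have dbound: "norm (A t *v zs k t + F t (zs k (max 0 (t - hk k)))) \<le> M"
    if t: "t \<in> {0..min (Ts i) (Ts k)}" for k t
  proof -
    have tk: "t \<in> {0..Ts k}" using t by auto
    have "norm (zs k t) \<le> D * R2" using D(2)[of "zs k t"] zs_bnd[OF tk] D(1)
      by (meson mult_left_mono less_imp_le order_trans)
    then have n1: "norm (A t *v zs k t) \<le> real CARD('n) * (\<bar>MA\<bar> * (D * R2))"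
    proof -
      assume z: "norm (zs k t) \<le> D * R2"
      have "norm (A t) \<le> \<bar>MA\<bar>" using MA[of t] t by force
      then have "norm (A t) * norm (zs k t) \<le> \<bar>MA\<bar> * (D * R2)"
        using z by (intro mult_mono) auto
      then show ?thesis using norm_mv_le[of "A t" "zs k t"]
        by (meson mult_left_mono of_nat_0_le_iff order_trans)
    qed
    have "t \<in> J" using tk TsJ[of k] Icc_J by blast
    then have n2: "norm (F t (zs k (max 0 (t - hk k)))) \<le> D * B"
      using D(2) bF D(1) by (meson mult_left_mono less_imp_le order_trans)
    show ?thesis unfolding M_def using n1 n2 norm_triangle_ineq[of "A t *v zs k t" "F t (zs k (max 0 (t - hk k)))"] by linarith
  qed
  show ?thesis
  proof (rule that[of "3 * M + 1"])
    show "3 * M + 1 > 0" using M0 by simp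
    fix k x y assume x: "x \<in> {0..min (Ts i) (Ts k)}" and y: "y \<in> {0..min (Ts i) (Ts k)}"
    define S where "S = {0..min (Ts i) (Ts k)}"
    have dS: "(zs k has_vector_derivative A u *v zs k u + F u (zs k (max 0 (u - hk k)))) (at u within S)"
      if "u \<in> S" for u
      by (rule has_vector_derivative_within_subset[OF zs_deriv]) (use that in \<open>auto simp: S_def\<close>)
    have seg: "closed_segment x y \<subseteq> S"
      using x y unfolding S_def by (intro closed_segment_subset) auto
    have lin: "norm (zs k y - zs k x - (y - x) *\<^sub>R (A x *v zs k x + F x (zs k (max 0 (x - hk k)))))
          \<le> norm (y - x) * (2 * M)"
    proof (rule vector_differentiable_bound_linearization[OF dS seg])
      fix u assume u: "u \<in> S"
      have "norm ((A u *v zs k u + F u (zs k (max 0 (u - hk k)))) - (A x *v zs k x + F x (zs k (max 0 (x - hk k)))))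
          \<le> M + M"
        using dbound[of u k] dbound[of x k] u x unfolding S_def
        by (meson add_mono norm_triangle_ineq4 order_trans)
      then show "norm ((A u *v zs k u + F u (zs k (max 0 (u - hk k)))) - (A x *v zs k x + F x (zs k (max 0 (x - hk k))))) \<le> 2 * M"
        by simp
    next
      show "x \<in> S" using x unfolding S_def .
    qed (simp)
    have "norm ((y - x) *\<^sub>R (A x *v zs k x + F x (zs k (max 0 (x - hk k))))) \<le> \<bar>y - x\<bar> * M"
      using dbound[OF x] by (simp add: mult_left_mono)
    then have "norm (zs k y - zs k x) \<le> \<bar>y - x\<bar> * (2 * M) + \<bar>y - x\<bar> * M"
      using lin norm_triangle_ineq4 by (smt (verit, ccfv_threshold) norm_triangle_sub real_norm_def)
    also have "\<dots> \<le> (3 * M + 1) * \<bar>x - y\<bar>" by (simp add: algebra_simps abs_minus_commute)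
    finally show "norm (zs k x - zs k y) \<le> (3 * M + 1) * \<bar>x - y\<bar>" by (simp add: norm_minus_commute)
  qed
qed

lemma w_lip:
  obtains L where "L > 0" "\<And>k x y. x \<in> {0..Ts i} \<Longrightarrow> y \<in> {0..Ts i} \<Longrightarrow> norm (w k x - w k y) \<le> L * \<bar>x - y\<bar>"
proof -
  obtain L where L: "L > 0" "\<And>k x y. x \<in> {0..min (Ts i) (Ts k)} \<Longrightarrow> y \<in> {0..min (Ts i) (Ts k)} \<Longrightarrow>
     norm (zs k x - zs k y) \<le> L * \<bar>x - y\<bar>" using zs_lip by blast
  show ?thesis
  proof (rule that[OF L(1)])
    fix k x y assume x: "x \<in> {0..Ts i}" and y: "y \<in> {0..Ts i}"
    have "norm (w k x - w k y) \<le> L * \<bar>min x (Ts k) - min y (Ts k)\<bar>"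
      unfolding w_def using x y Ts0[of k] by (intro L(2)) auto
    also have "\<dots> \<le> L * \<bar>x - y\<bar>" using L(1) by (intro mult_left_mono) auto
    finally show "norm (w k x - w k y) \<le> L * \<bar>x - y\<bar>" .
  qed
qed

lemma w_norm_bnd: obtains D where "\<And>k t. 0 \<le> t \<Longrightarrow> norm (w k t) \<le> D"
proof -
  obtain D where D: "D > 0" "\<And>x. norm x \<le> D * nrm x" using nrm_lower[OF Nrm] by blast
  have "norm (w k t) \<le> D * R2" if "0 \<le> t" for k t
    using D(2)[of "w k t"] w_bnd[OF that, of k] D(1) by (meson mult_left_mono less_imp_le order_trans)
  then show ?thesis using that by blast
qed

end


context constr3 begin

definition Pp :: "nat \<Rightarrow> (nat \<Rightarrow> nat) \<Rightarrow> bool" where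
  "Pp i r \<longleftrightarrow> (\<exists>g. continuous_on {0..Ts i} g \<and>
      (\<forall>e>0. \<exists>M. \<forall>n\<ge>M. \<forall>x\<in>{0..Ts i}. norm (w (r n) x - g x) < e))"

lemma Pp_sub:
  fixes r :: "nat \<Rightarrow> nat"
  shows "\<exists>k::nat\<Rightarrow>nat. strict_mono k \<and> Pp i (r \<circ> k)"
proof -
  obtain D where D: "\<And>k t. 0 \<le> t \<Longrightarrow> norm (w k t) \<le> D" using w_norm_bnd by blast
  obtain L where L: "L > 0" "\<And>k x y. x \<in> {0..Ts i} \<Longrightarrow> y \<in> {0..Ts i} \<Longrightarrow> norm (w k x - w k y) \<le> L * \<bar>x - y\<bar>"
    using w_lip by blast
  obtain g k where g: "continuous_on {0..Ts i} g" "strict_mono (k :: nat \<Rightarrow> nat)"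
      "\<And>e. 0 < e \<Longrightarrow> \<exists>M. \<forall>n x. n \<ge> M \<and> x \<in> {0..Ts i} \<longrightarrow> norm ((\<lambda>n. w (r n)) (k n) x - g x) < e"
  proof (rule Arzela_Ascoli[of "{0..Ts i}" "\<lambda>n. w (r n)" D])
    show "compact {0..Ts i}" by simp
    show "norm (w (r n) x) \<le> D" if "x \<in> {0..Ts i}" for n x using D that by simp
    show "\<exists>d>0. \<forall>n y. y \<in> {0..Ts i} \<and> norm (x - y) < d \<longrightarrow> norm (w (r n) x - w (r n) y) < e"
      if x: "x \<in> {0..Ts i}" and e: "0 < e" for x e
    proof (intro exI[of _ "e / L"] conjI allI impI)
      show "e / L > 0" using e L(1) by simp
      fix n y assume y: "y \<in> {0..Ts i} \<and> norm (x - y) < e / L"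
      have "norm (w (r n) x - w (r n) y) \<le> L * \<bar>x - y\<bar>" using L(2) x y by blast
      also have "\<dots> < e" using y L(1) by (simp add: field_simps)
      finally show "norm (w (r n) x - w (r n) y) < e" .
    qed
  qed blast
  show ?thesis
  proof (intro exI[of _ k] conjI g(2))
    show "Pp i (r \<circ> k)" unfolding Pp_def
    proof (intro exI[of _ g] conjI g(1) allI impI)
      fix e :: real assume "e > 0"
      then obtain M where "\<forall>n x. n \<ge> M \<and> x \<in> {0..Ts i} \<longrightarrow> norm (w (r (k n)) x - g x) < e" using g(3) by blast
      then have "\<forall>n\<ge>M. \<forall>x\<in>{0..Ts i}. norm (w ((r \<circ> k) n) x - g x) < e" by simp
      then show "\<exists>M. \<forall>n\<ge>M. \<forall>x\<in>{0..Ts i}. norm (w ((r \<circ> k) n) x - g x) < e" by blast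
    qed
  qed
qed

lemma Pp_P:
  fixes r k1 k2 :: "nat \<Rightarrow> nat"
  assumes "Pp i (r \<circ> k1)" "\<And>j. Nn \<le> j \<Longrightarrow> \<exists>j'. j \<le> j' \<and> k2 j = k1 j'"
  shows "Pp i (r \<circ> k2)"
proof -
  obtain g where g: "continuous_on {0..Ts i} g" "\<And>e. e > 0 \<Longrightarrow> \<exists>M. \<forall>n\<ge>M. \<forall>x\<in>{0..Ts i}. norm (w ((r \<circ> k1) n) x - g x) < e"
    using assms(1) unfolding Pp_def by blast
  show ?thesis unfolding Pp_def
  proof (intro exI[of _ g] conjI g(1) allI impI)
    fix e :: real assume e: "e > 0"
    obtain M where M: "\<forall>n\<ge>M. \<forall>x\<in>{0..Ts i}. norm (w ((r \<circ> k1) n) x - g x) < e" using g(2)[OF e] by blast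
    show "\<exists>M. \<forall>n\<ge>M. \<forall>x\<in>{0..Ts i}. norm (w ((r \<circ> k2) n) x - g x) < e"
    proof (intro exI[of _ "max M Nn"] allI impI ballI)
      fix n x assume n: "max M Nn \<le> n" and x: "x \<in> {0..Ts i}"
      obtain j' where j': "n \<le> j'" "k2 n = k1 j'" using assms(2)[of n] n by auto
      show "norm (w ((r \<circ> k2) n) x - g x) < e" using M j' n x by auto
    qed
  qed
qed

lemma diag: obtains kk where "strict_mono kk" "\<And>i. Pp i kk"
proof -
  obtain k where "strict_mono (k :: nat \<Rightarrow> nat)" "\<And>i. Pp i (id \<circ> k)"
    using subsequence_diagonalization_lemma[of Pp id] Pp_sub Pp_P by blast
  then show ?thesis using that by simp
qed

end

locale constr4 = constr3 nrm A T P N lam F J B Ts zs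
  for nrm :: "real^'n \<Rightarrow> real" and A T P N lam F J B Ts zs +
  fixes kk :: "nat \<Rightarrow> nat"
  assumes kk_sm: "strict_mono kk" and kk_P: "\<And>i. Pp i kk"
begin

definition zl :: "real \<Rightarrow> real^'n" where "zl t = lim (\<lambda>n. w (kk n) t)"

lemma zl_unif:
  shows "continuous_on {0..Ts i} zl" "\<And>e. e > 0 \<Longrightarrow> \<exists>M. \<forall>n\<ge>M. \<forall>x\<in>{0..Ts i}. norm (w (kk n) x - zl x) < e"
    "\<And>x. x \<in> {0..Ts i} \<Longrightarrow> (\<lambda>n. w (kk n) x) \<longlonglongrightarrow> zl x"
proof -
  obtain g where g: "continuous_on {0..Ts i} g" "\<And>e. e > 0 \<Longrightarrow> \<exists>M. \<forall>n\<ge>M. \<forall>x\<in>{0..Ts i}. norm (w (kk n) x - g x) < e"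
    using kk_P[of i] unfolding Pp_def by blast
  have pt: "(\<lambda>n. w (kk n) x) \<longlonglongrightarrow> g x" if x: "x \<in> {0..Ts i}" for x
    unfolding LIMSEQ_iff
  proof (intro allI impI)
    fix e :: real assume "e > 0"
    then obtain M where "\<forall>n\<ge>M. \<forall>x\<in>{0..Ts i}. norm (w (kk n) x - g x) < e" using g(2) by blast
    then show "\<exists>M. \<forall>n\<ge>M. norm (w (kk n) x - g x) < e" using x by blast
  qed
  have eq: "zl x = g x" if "x \<in> {0..Ts i}" for x
    unfolding zl_def using pt[OF that] by (rule limI)
  show "continuous_on {0..Ts i} zl" using g(1) eq continuous_on_eq by (metis (no_types, lifting))
  show "\<exists>M. \<forall>n\<ge>M. \<forall>x\<in>{0..Ts i}. norm (w (kk n) x - zl x) < e" if "e > 0" for e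
    using g(2)[OF that] eq by simp
  show "(\<lambda>n. w (kk n) x) \<longlonglongrightarrow> zl x" if "x \<in> {0..Ts i}" for x using pt[OF that] eq[OF that] by simp
qed

lemma kk_ge: "n \<le> kk n" using kk_sm by (rule seq_suble)

lemma ev_big: "eventually (\<lambda>n. Ts i \<le> Ts (kk n)) sequentially"
  unfolding eventually_sequentially
proof (intro exI[of _ i] allI impI)
  fix n assume "i \<le> n"
  then have "i \<le> kk n" using kk_ge[of n] by linarith
  then show "Ts i \<le> Ts (kk n)" using Tsmono by (simp add: monoD)
qed

lemma Ts_in: "t \<in> {0..Ts i} \<Longrightarrow> t \<in> J" using TsJ[of i] Icc_J by blast

lemma conv_shift:
  assumes s: "s \<in> {0..Ts i}"
  shows "(\<lambda>n. w (kk n) (max 0 (s - hk (kk n)))) \<longlonglongrightarrow> zl s"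
proof -
  define u where "u n = max 0 (s - hk (kk n))" for n
  have hkk: "(\<lambda>n. hk (kk n)) \<longlonglongrightarrow> 0" using LIMSEQ_subseq_LIMSEQ[OF hk_lim kk_sm] by (simp add: o_def)
  have "(\<lambda>n. max 0 (s - hk (kk n))) \<longlonglongrightarrow> max 0 (s - 0)"
    by (intro tendsto_max tendsto_const tendsto_diff hkk)
  then have u: "u \<longlonglongrightarrow> s" unfolding u_def using s by simp
  have uS: "u n \<in> {0..Ts i}" for n unfolding u_def using s hk_pos[of "kk n"] by auto
  have t1: "(\<lambda>n. zl (u n)) \<longlonglongrightarrow> zl s"
    by (rule continuous_on_tendsto_compose[OF zl_unif(1) u s]) (use uS in auto)
  have t2: "(\<lambda>n. w (kk n) (u n) - zl (u n)) \<longlonglongrightarrow> 0"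
    unfolding LIMSEQ_iff
  proof (intro allI impI)
    fix e :: real assume "e > 0"
    then obtain M where M: "\<forall>n\<ge>M. \<forall>x\<in>{0..Ts i}. norm (w (kk n) x - zl x) < e" using zl_unif(2) by blast
    have "\<forall>n\<ge>M. norm (w (kk n) (u n) - zl (u n)) < e" using M uS by blast
    then show "\<exists>M. \<forall>n\<ge>M. norm (w (kk n) (u n) - zl (u n) - 0) < e" by auto
  qed
  have "(\<lambda>n. (w (kk n) (u n) - zl (u n)) + zl (u n)) \<longlonglongrightarrow> 0 + zl s"
    by (rule tendsto_add[OF t2 t1])
  then show ?thesis unfolding u_def by simp
qed

lemma zl_eq:
  assumes t: "t \<in> {0..Ts i}"
  shows "zl t = Phi t *v (zl 0 + integral {0..t} (\<lambda>s. Psi s *v F s (zl s)))"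
proof -
  have sub: "{0..t} \<subseteq> {0..Ts i}" using t by auto
  have subJ: "{0..t} \<subseteq> J" using sub Ts_in by blast
  have t0: "0 \<in> {0..Ts i}" using Ts0[of i] by simp
  obtain M where M: "0 \<le> M" "\<And>s x. s \<in> {0..Ts i} \<Longrightarrow> norm (Psi s *v F s x) \<le> M"
    using integrand_bound[OF TsJ] by blast
  define fn where "fn n s = Psi s *v F s (w (kk n) (max 0 (s - hk (kk n))))" for n s
  have lim_int: "(\<lambda>n. integral {0..t} (fn n)) \<longlonglongrightarrow> integral {0..t} (\<lambda>s. Psi s *v F s (zl s))"
  proof (rule dominated_convergence(2))
    show "fn n integrable_on {0..t}" for n
    proof -
      have cm: "continuous_on {0..t} (\<lambda>s. max 0 (s - hk (kk n)))" by (intro continuous_intros)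
      have "continuous_on {0..t} (\<lambda>s. w (kk n) (max 0 (s - hk (kk n))))"
        by (rule continuous_on_compose2[OF w_cont cm]) auto
      then have "continuous_on {0..t} (\<lambda>s. F s (w (kk n) (max 0 (s - hk (kk n)))))"
        by (intro F_comp continuous_on_id) (use subJ in auto)
      then have "continuous_on {0..t} (fn n)" unfolding fn_def
        by (intro cont_mv continuous_on_subset[OF Psi_cont]) auto
      then show ?thesis by (rule integrable_continuous_interval)
    qed
    show "(\<lambda>s. M) integrable_on {0..t}" by (rule integrable_continuous_interval[OF continuous_on_const])
    show "norm (fn n s) \<le> M" if "s \<in> {0..t}" for n s unfolding fn_def using M(2) that sub by blast
    show "(\<lambda>n. fn n s) \<longlonglongrightarrow> Psi s *v F s (zl s)" if s: "s \<in> {0..t}" for s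
    proof -
      have si: "s \<in> {0..Ts i}" using s sub by auto
      have "(\<lambda>n. F s (w (kk n) (max 0 (s - hk (kk n))))) \<longlonglongrightarrow> F s (zl s)"
        by (rule isCont_tendsto_compose[OF F_isCont[OF Ts_in[OF si]] conv_shift[OF si]])
      then show ?thesis unfolding fn_def by (rule mv_tendsto)
    qed
  qed
  have lim_rhs: "(\<lambda>n. Phi t *v (w (kk n) 0 + integral {0..t} (fn n))) \<longlonglongrightarrow>
                 Phi t *v (zl 0 + integral {0..t} (\<lambda>s. Psi s *v F s (zl s)))"
    by (intro mv_tendsto tendsto_add zl_unif(3)[OF t0] lim_int)
  have ev: "eventually (\<lambda>n. Phi t *v (w (kk n) 0 + integral {0..t} (fn n)) = w (kk n) t) sequentially"
    using ev_big[of i]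
  proof (rule eventually_mono)
    fix n assume big: "Ts i \<le> Ts (kk n)"
    have tk: "t \<in> {0..Ts (kk n)}" using t big by auto
    have "integral {0..t} (fn n) = integral {0..t} (\<lambda>s. Psi s *v F s (zs (kk n) (max 0 (s - hk (kk n)))))"
    proof (rule integral_cong)
      fix s assume s: "s \<in> {0..t}"
      have "max 0 (s - hk (kk n)) \<le> Ts (kk n)" using s tk hk_pos[of "kk n"] by auto
      then show "fn n s = Psi s *v F s (zs (kk n) (max 0 (s - hk (kk n))))"
        unfolding fn_def by (simp add: w_eq)
    qed
    moreover have "w (kk n) 0 = zs (kk n) 0" using Ts0 by (simp add: w_eq)
    moreover have "w (kk n) t = zs (kk n) t" using tk by (simp add: w_eq)
    ultimately show "Phi t *v (w (kk n) 0 + integral {0..t} (fn n)) = w (kk n) t"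
      using zs_eq[OF tk] by simp
  qed
  have "(\<lambda>n. w (kk n) t) \<longlonglongrightarrow> Phi t *v (zl 0 + integral {0..t} (\<lambda>s. Psi s *v F s (zl s)))"
    by (rule Lim_transform_eventually[OF lim_rhs ev])
  then show ?thesis using zl_unif(3)[OF t] LIMSEQ_unique by blast
qed

lemma zl_bnd:
  assumes t: "t \<in> {0..Ts i}"
  shows "nrm (zl t) \<le> R2"
proof -
  have "(\<lambda>n. nrm (w (kk n) t)) \<longlonglongrightarrow> nrm (zl t)"
    by (rule continuous_on_tendsto_compose[OF nrm_continuous[OF Nrm, of UNIV] zl_unif(3)[OF t]]) auto
  moreover have "eventually (\<lambda>n. nrm (w (kk n) t) \<le> R2) sequentially"
    using w_bnd t by auto
  ultimately show ?thesis by (rule tendsto_upperbound) simp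
qed

end


context constr4 begin

lemma zl_local:
  assumes t: "t \<in> J"
  obtains b where "b \<in> J" "t \<le> b" "at t within J = at t within {0..b}"
    "continuous_on {0..b} zl"
    "(zl has_vector_derivative A t *v zl t + F t (zl t)) (at t within {0..b})"
proof -
  have "\<exists>b. b \<in> J \<and> t \<le> b \<and> at t within J = at t within {0..b}"
    apply (rule loc_J[of J t])
       apply (rule Jsub)
      apply (erule (2) Jdown)
     apply (rule t)
    apply blast
    done
  then obtain b where b: "b \<in> J" "t \<le> b" "at t within J = at t within {0..b}" by blast
  obtain i where i: "b \<le> Ts i" using TsEx[OF b(1)] by blast
  have b0: "0 \<le> b" using b(1) Jsub by auto
  have sub: "{0..b} \<subseteq> {0..Ts i}" using i by auto
  have subJ: "{0..b} \<subseteq> J" using Icc_J[OF b(1)] .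
  have cz: "continuous_on {0..b} zl" by (rule continuous_on_subset[OF zl_unif(1) sub])
  define g where "g s = Psi s *v F s (zl s)" for s
  have cg: "continuous_on {0..b} g"
    unfolding g_def by (intro cont_mv F_comp continuous_on_id cz continuous_on_subset[OF Psi_cont])
      (use subJ Jsub in auto)
  have tb: "t \<in> {0..b}" using t b Jsub by auto
  have d: "((\<lambda>t. Phi t *v (zl 0 + integral {0..t} g)) has_vector_derivative
           A t *v (Phi t *v (zl 0 + integral {0..t} g)) + Phi t *v g t) (at t within {0..b})"
    by (rule ivp_deriv[OF b0 cg tb])
  have eqs: "zl x = Phi x *v (zl 0 + integral {0..x} g)" if "x \<in> {0..b}" for x
    using zl_eq[of x i] that sub unfolding g_def by auto
  have e2: "Phi t *v g t = F t (zl t)"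
    unfolding g_def using inv1[of t] tb by (simp add: matrix_vector_mul_assoc)
  have "(zl has_vector_derivative A t *v zl t + F t (zl t)) (at t within {0..b})"
  proof (rule has_vector_derivative_transform[OF tb eqs])
    show "((\<lambda>x. Phi x *v (zl 0 + integral {0..x} g)) has_vector_derivative A t *v zl t + F t (zl t)) (at t within {0..b})"
      using d unfolding eqs[OF tb, symmetric] e2 .
  qed
  then show ?thesis using that b cz by blast
qed

lemma zl_deriv: "t \<in> J \<Longrightarrow> (zl has_vector_derivative A t *v zl t + F t (zl t)) (at t within J)"
  by (metis zl_local)

lemma zl_cont: "continuous_on J zl"
  unfolding continuous_on_eq_continuous_within
proof
  fix t assume t: "t \<in> J"
  obtain b where b: "b \<in> J" "t \<le> b" "at t within J = at t within {0..b}" "continuous_on {0..b} zl"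
    using zl_local[OF t] by blast
  have "t \<in> {0..b}" using t b Jsub by auto
  then have "continuous (at t within {0..b}) zl" using b(4) continuous_on_eq_continuous_within by blast
  then show "continuous (at t within J) zl" using b(3) by simp
qed

lemma zl_bound: "t \<in> J \<Longrightarrow> nrm (zl t) \<le> R2"
proof -
  assume t: "t \<in> J"
  obtain i where "t \<le> Ts i" using TsEx[OF t] by blast
  then show ?thesis using zl_bnd[of t i] t Jsub by auto
qed

lemma zl_dcont: "continuous_on J (\<lambda>t. A t *v zl t + F t (zl t))"
  by (intro continuous_on_add cont_mv continuous_on_subset[OF cA] Jsub zl_cont F_comp continuous_on_id)
     auto

end


lemma exhaust:
  fixes \<tau> :: ereal
  assumes "\<tau> > 0"
  obtains Ts :: "nat \<Rightarrow> real" where "\<And>k. Ts k \<in> Ivl \<tau>" "mono Ts" "\<And>t. t \<in> Ivl \<tau> \<Longrightarrow> \<exists>k. t \<le> Ts k"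
proof (cases \<tau>)
  case (real c)
  then have c: "c > 0" using assms by (simp add: zero_ereal_def)
  define Ts where "Ts k = c - c / (real k + 2)" for k :: nat
  show ?thesis
  proof (rule that[of Ts])
    show "Ts k \<in> Ivl \<tau>" for k
    proof -
      have "c / (real k + 2) \<le> c" using c by (simp add: field_simps)
      moreover have "c / (real k + 2) > 0" using c by simp
      ultimately show ?thesis unfolding Ivl_def Ts_def real by simp
    qed
    show "mono Ts" unfolding mono_def Ts_def
    proof (intro allI impI)
      fix x y :: nat assume "x \<le> y"
      then have "c / (real y + 2) \<le> c / (real x + 2)" using c by (intro divide_left_mono) auto
      then show "c - c / (real x + 2) \<le> c - c / (real y + 2)" by simp
    qed
    fix t assume t: "t \<in> Ivl \<tau>"
    then have tc: "t < c" "0 \<le> t" unfolding Ivl_def real by auto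
    obtain k :: nat where k: "c / (c - t) \<le> real k" using real_arch_simple by blast
    have "c / (real k + 2) \<le> c - t"
    proof -
      have ct: "c - t > 0" using tc by simp
      have "c \<le> real k * (c - t)" using k ct by (simp add: field_simps)
      also have "\<dots> \<le> (real k + 2) * (c - t)" using ct by (intro mult_right_mono) auto
      finally show ?thesis using ct by (simp add: field_simps)
    qed
    then show "\<exists>k. t \<le> Ts k" unfolding Ts_def by (intro exI[of _ k]) simp
  qed
next
  case PInf
  show ?thesis
  proof (rule that[of "\<lambda>k. real k"])
    show "real k \<in> Ivl \<tau>" for k unfolding Ivl_def PInf by simp
    show "mono (\<lambda>k. real k)" by (simp add: mono_def)
    show "\<exists>k. t \<le> real k" for t using real_arch_simple by blast
  qed
next
  case MInf
  then show ?thesis using assms by simp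
qed

lemma Ivl_notbot:
  assumes t: "t \<in> Ivl \<tau>"
  shows "at t within Ivl \<tau> \<noteq> bot"
proof -
  have "ereal t < \<tau>" using t unfolding Ivl_def by simp
  then obtain s where s: "ereal t < ereal s" "ereal s < \<tau>" using ereal_dense2 by blast
  have ts: "t < s" using s by simp
  have "{t..s} \<subseteq> Ivl \<tau>" using t s unfolding Ivl_def
    by auto (meson ereal_less_eq(3) le_less_trans)
  then have "at t within {t..s} \<le> at t within Ivl \<tau>" by (rule at_le)
  moreover have "at t within {t..s} \<noteq> bot" using at_within_Icc_at_right[OF ts] by simp
  ultimately show ?thesis by (metis bot.extremum_uniqueI)
qed

theorem mainTheorem4:
  fixes nrm :: "real^'n \<Rightarrow> real"
    and A :: "real \<Rightarrow> real^'n^'n"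
    and f :: "real \<Rightarrow> real^'n \<Rightarrow> real^'n"
    and P :: "real \<Rightarrow> real^'n^'n"
    and \<rho> N lam L :: real
  assumes "is_norm nrm"
    and "\<rho> > 0"
    and "continuous_on {0..} A"
    and "continuous_on ({0..} \<times> UNIV) (\<lambda>(t, x). f t x)"
    and "exp_dichotomy nrm A P N lam"
    and "L > 0"
    and "\<forall>t\<ge>0. \<forall>x. nrm x \<le> \<rho> \<longrightarrow> nrm (f t x) \<le> L * nrm x"
    and "L < lam / (2 * N)"
  shows "\<exists>\<epsilon>>0. \<forall>\<tau>::ereal. \<forall>y. \<tau> > 0 \<and>
           pseudosolution nrm (\<lambda>t x. A t *v x + f t x) \<tau> y \<and>
           sigma nrm (\<lambda>t x. A t *v x + f t x) \<tau> y \<le> \<epsilon> \<longrightarrow>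
           (\<exists>z. pseudosolution nrm (\<lambda>t x. A t *v x + f t x) \<tau> z \<and>
                (\<forall>t\<in>Ivl \<tau>. nrm (z t) \<le> \<rho>) \<and>
                (\<forall>t\<in>Ivl \<tau>. err_fun nrm (\<lambda>t x. A t *v x + f t x) \<tau> z t =
                            err_fun nrm (\<lambda>t x. A t *v x + f t x) \<tau> y t))"
proof -
  have Nrm: "is_norm nrm" and rho: "\<rho> > 0" and cA: "continuous_on {0..} A"
    and cf: "continuous_on ({0..} \<times> UNIV) (\<lambda>(t, x). f t x)" and L0: "L > 0"
    and fL: "\<forall>t\<ge>0. \<forall>x. nrm x \<le> \<rho> \<longrightarrow> nrm (f t x) \<le> L * nrm x"
    and Ls: "L < lam / (2 * N)" using assms by auto
  obtain T where N0: "N > 0" and lam0: "lam > 0" and TM: "transition_matrix A T"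
    and Pc: "\<forall>t\<ge>0. \<forall>s\<ge>0. P t ** T t s = T t s ** P s"
    and d1: "\<forall>t s. 0 \<le> s \<and> s \<le> t \<longrightarrow> mnorm nrm (T t s ** P s) \<le> N * exp (- lam * (t - s))"
    and d2: "\<forall>t s. 0 \<le> t \<and> t \<le> s \<longrightarrow> mnorm nrm (T t s ** (mat 1 - P s)) \<le> N * exp (- lam * (s - t))"
    using assms(5) unfolding exp_dichotomy_def by blast
  define eps where "eps = \<rho> * (lam / (2 * N) - L)"
  have eps0: "eps > 0" unfolding eps_def using rho Ls by simp
  let ?g = "\<lambda>t x. A t *v x + f t x"
  show ?thesis
  proof (intro exI[of _ eps] conjI eps0 allI impI)
    fix \<tau> :: ereal and y
    assume H: "\<tau> > 0 \<and> pseudosolution nrm ?g \<tau> y \<and> sigma nrm ?g \<tau> y \<le> eps"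
    then have tau0: "\<tau> > 0" and psy: "pseudosolution nrm ?g \<tau> y" and sig: "sigma nrm ?g \<tau> y \<le> eps" by auto
    define J where "J = Ivl \<tau>"
    have J0: "0 \<in> J" unfolding J_def Ivl_def using tau0 by (simp add: zero_ereal_def)
    have Jsub: "J \<subseteq> {0..}" unfolding J_def Ivl_def by auto
    have Jdown: "s \<in> J" if "t \<in> J" "0 \<le> s" "s \<le> t" for t s
      using that unfolding J_def Ivl_def by auto (meson ereal_less_eq(3) le_less_trans)
    have dy: "\<And>t. t \<in> J \<Longrightarrow> y differentiable (at t within J)"
      and cdy: "continuous_on J (\<lambda>t. vector_derivative y (at t within J))"
      and bdd: "bdd_above (err_fun nrm ?g \<tau> y ` J)"
      using psy unfolding pseudosolution_def J_def by auto
    define e where "e t = err_fun nrm ?g \<tau> y t" for t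
    have e_le: "e t \<le> eps" if "t \<in> J" for t
    proof -
      have "e t \<le> sigma nrm ?g \<tau> y" unfolding e_def sigma_def J_def[symmetric]
        by (rule cSUP_upper[OF that bdd])
      then show ?thesis using sig by simp
    qed
    have e_ge: "0 \<le> e t" for t unfolding e_def err_fun_def by (rule nrm_nonneg[OF Nrm])
    have cy: "continuous_on J y"
      unfolding continuous_on_eq_continuous_within
      using dy differentiable_imp_continuous_within by blast
    have cfy: "continuous_on J (\<lambda>t. f t (y t))"
    proof -
      have "continuous_on J (\<lambda>t. (\<lambda>(t, x). f t x) (t, y t))"
        by (rule continuous_on_compose2[OF cf continuous_on_Pair[OF continuous_on_id cy]]) (use Jsub in auto)
      then show ?thesis by simp
    qed
    have cAy: "continuous_on J (\<lambda>t. A t *v y t)"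
      by (rule bounded_bilinear.continuous_on[OF bb_mv continuous_on_subset[OF cA Jsub] cy])
    have ce: "continuous_on J e"
    proof -
      have "continuous_on J (\<lambda>t. vector_derivative y (at t within J) - (A t *v y t + f t (y t)))"
        by (intro continuous_on_diff continuous_on_add cdy cAy cfy)
      then have "continuous_on J (\<lambda>t. nrm (vector_derivative y (at t within J) - (A t *v y t + f t (y t))))"
        by (rule continuous_on_compose2[OF nrm_continuous[OF Nrm, of UNIV]]) auto
      then show ?thesis unfolding e_def err_fun_def J_def by simp
    qed
    obtain b0 :: "real^'n" where b0: "b0 \<in> Basis" using nonempty_Basis by blast
    have "b0 \<noteq> 0" using b0 by auto
    then have nb0: "nrm b0 > 0" using nrm_nonneg[OF Nrm, of b0] nrm_zero_iff[OF Nrm, of b0] by auto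
    define u where "u = (1 / nrm b0) *\<^sub>R b0"
    have nu: "nrm u = 1" unfolding u_def using nb0 nrm_scale[OF Nrm] by simp
    define r where "r x = (\<rho> / max \<rho> (nrm x)) *\<^sub>R x" for x :: "real^'n"
    have mpos: "max \<rho> (nrm x) > 0" for x using rho by simp
    have r_cont: "continuous_on UNIV r"
      unfolding r_def
      by (intro continuous_on_scaleR continuous_on_divide continuous_on_const continuous_on_max
          nrm_continuous[OF Nrm] continuous_on_id) (use mpos in \<open>auto simp: less_imp_neq[symmetric]\<close>)
    have r_id: "nrm x \<le> \<rho> \<Longrightarrow> r x = x" for x unfolding r_def using rho by simp
    have r_bnd: "nrm (r x) \<le> \<rho>" for x
    proof -
      have "nrm (r x) = \<rho> * nrm x / max \<rho> (nrm x)"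
        unfolding r_def using nrm_scale[OF Nrm] rho mpos[of x] by simp
      also have "\<dots> \<le> \<rho>" using rho mpos[of x] nrm_nonneg[OF Nrm, of x]
        by (simp add: divide_le_eq mult_left_mono)
      finally show ?thesis .
    qed
    define F where "F t x = f t (r x) + e t *\<^sub>R u" for t x
    define B where "B = L * \<rho> + eps"
    have B0: "0 \<le> B" unfolding B_def using L0 rho eps0 by simp
    have cF: "continuous_on (J \<times> UNIV) (\<lambda>p. F (fst p) (snd p))"
    proof -
      have c1: "continuous_on (J \<times> UNIV) (\<lambda>p. (\<lambda>(t, x). f t x) (fst p, r (snd p)))"
        by (rule continuous_on_compose2[OF cf]) (use Jsub in \<open>auto intro!: continuous_intros
            continuous_on_compose2[OF r_cont]\<close>)
      have c2: "continuous_on (J \<times> UNIV) (\<lambda>p. e (fst p) *\<^sub>R u)"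
        by (intro continuous_on_scaleR continuous_on_const continuous_on_compose2[OF ce continuous_on_fst]) auto
      show ?thesis unfolding F_def using continuous_on_add[OF c1 c2] by simp
    qed
    have bF: "nrm (F t x) \<le> B" if t: "t \<in> J" for t x
    proof -
      have "nrm (f t (r x)) \<le> L * nrm (r x)" using fL t Jsub r_bnd by auto
      also have "\<dots> \<le> L * \<rho>" using r_bnd L0 by (simp add: mult_left_mono)
      finally have n1: "nrm (f t (r x)) \<le> L * \<rho>" .
      have n2: "nrm (e t *\<^sub>R u) \<le> eps" using nrm_scale[OF Nrm] nu e_le[OF t] e_ge[of t] by simp
      show ?thesis unfolding F_def B_def using nrm_tri[OF Nrm, of "f t (r x)" "e t *\<^sub>R u"] n1 n2 by linarith
    qed
    obtain Ts :: "nat \<Rightarrow> real" where TsJ': "\<And>k. Ts k \<in> Ivl \<tau>" and Tsm: "mono Ts" and TsE': "\<And>t. t \<in> Ivl \<tau> \<Longrightarrow> \<exists>k. t \<le> Ts k"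
      using exhaust[OF tau0] by blast
    have TsJ: "\<And>k. Ts k \<in> J" and TsE: "\<And>t. t \<in> J \<Longrightarrow> \<exists>k. t \<le> Ts k"
      using TsJ' TsE' unfolding J_def by auto
    have C2: "constr2 nrm A T P N lam F J B Ts"
      unfolding constr2_def constr2_axioms_def constr_def constr_axioms_def dich_def
      using Nrm TM cA Pc d1 d2 lam0 N0 J0 Jsub Jdown cF bF B0 TsJ Tsm TsE by blast
    interpret C2: constr2 nrm A T P N lam F J B Ts by (rule C2)
    obtain zs where zs: "\<And>k. C2.good k (zs k)" using C2.approx by blast
    interpret C3: constr3 nrm A T P N lam F J B Ts zs
      by (rule constr3.intro[OF C2]) (unfold_locales, rule zs)
    obtain kk where kk: "strict_mono kk" "\<And>i. C3.Pp i kk" using C3.diag by blast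
    interpret C4: constr4 nrm A T P N lam F J B Ts zs kk
      by (rule constr4.intro) (unfold_locales, rule kk(1), rule kk(2))
    define z where "z = C4.zl"
    have R2a: "C2.R2 = 2 * N * B / lam" by (rule C2.R2_def)
    have "2 * N * B / lam = \<rho>" unfolding B_def eps_def using N0 lam0 by (simp add: field_simps)
    then have R2: "C2.R2 = \<rho>" using R2a by simp
    have zb: "nrm (z t) \<le> \<rho>" if "t \<in> J" for t using C4.zl_bound[OF that] R2 unfolding z_def by simp
    have Fz: "F t (z t) = f t (z t) + e t *\<^sub>R u" if "t \<in> J" for t
      unfolding F_def using r_id[OF zb[OF that]] by simp
    have vd: "vector_derivative z (at t within J) = A t *v z t + f t (z t) + e t *\<^sub>R u" if t: "t \<in> J" for t
    proof -
      have "vector_derivative z (at t within J) = A t *v z t + F t (z t)"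
        unfolding z_def by (rule vector_derivative_within[OF _ C4.zl_deriv[OF t]]) (use Ivl_notbot t in \<open>auto simp: J_def\<close>)
      then show ?thesis using Fz[OF t] by (simp add: algebra_simps)
    qed
    have errz: "err_fun nrm ?g \<tau> z t = e t" if t: "t \<in> J" for t
    proof -
      have "err_fun nrm ?g \<tau> z t = nrm (e t *\<^sub>R u)"
        unfolding err_fun_def J_def[symmetric] vd[OF t] by (simp add: algebra_simps)
      also have "\<dots> = e t" using nrm_scale[OF Nrm] nu e_ge[of t] by simp
      finally show ?thesis .
    qed
    have psz: "pseudosolution nrm ?g \<tau> z"
      unfolding pseudosolution_def J_def[symmetric]
    proof (intro conjI ballI)
      show "z differentiable (at t within J)" if "t \<in> J" for t
        unfolding z_def using C4.zl_deriv[OF that] by (rule differentiableI_vector)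
      show "continuous_on J (\<lambda>t. vector_derivative z (at t within J))"
      proof (rule continuous_on_eq[OF C4.zl_dcont])
        fix t assume t: "t \<in> J"
        show "A t *v C4.zl t + F t (C4.zl t) = vector_derivative z (at t within J)"
          using vd[OF t] Fz[OF t] unfolding z_def by (simp add: algebra_simps)
      qed
      show "bdd_above (err_fun nrm ?g \<tau> z ` J)"
        by (rule bdd_aboveI[of _ eps]) (use errz e_le in auto)
    qed
    show "\<exists>z. pseudosolution nrm ?g \<tau> z \<and> (\<forall>t\<in>Ivl \<tau>. nrm (z t) \<le> \<rho>) \<and>
            (\<forall>t\<in>Ivl \<tau>. err_fun nrm ?g \<tau> z t = err_fun nrm ?g \<tau> y t)"
      using psz zb errz unfolding J_def e_def by blast
  qed
qed



end
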